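(* Consider the following double-loop method (inexact accelerated proximal gradient) for minimizing $F(x)=f(x)+\omega(Ax)$, where $f:\mathbb R^n\to\mathbb R$ is convex, differentiable and $L$-Lipschitz smooth, $A\in\mathbb R^{m\times n}$, $\omega:\mathbb R^m\to\mathbb R$ is convex and globally $K_\omega$-Lipschitz, and $F$ has a minimizer $\bar x$. Parameters: $\mathcal E_0>0$, $p>1$, sequences $B_k>0$, $\rho_k\ge0$ with $L_k=B_k+\rho_k\in[L_{\min},L_{\max}]$ for constants $0<L_{\min}\le L_{\max}$; $\alpha_0=1$ and for $k\ge1$, $\alpha_k\in(0,1]$ with $1-\alpha_k=\alpha_k^2L_k/(\alpha_{k-1}^2L_{k-1})$; $\beta_0=1$, $\beta_k=\prod_{i=1}^k\max\big(1-\alpha_i,\frac{\alpha_i^2L_i}{\alpha_{i-1}^2L_{i-1}}\big)$. Initial points $x_{-1},x^\circ_{-1}\in\mathbb R^n$. Outer iteration $k\ge0$: $y_k=\alpha_kx^\circ_{k-1}+(1-\alpha_k)x_{k-1}$; $\lambda_k=L_k^{-1}$; $\tilde y_k=y_k-L_k^{-1}\nabla f(y_k)$. Inner loop: with $\Phi_k(u)=\omega(Au)+\frac1{2\lambda_k}\|u-\tilde y_k\|^2$, $\Psi_k(v)=\frac1{2\lambda_k}\|\lambda_kA^\top v-\tilde y_k\|^2+\omega^\star(v)-\frac1{2\lambda_k}\|\tilde y_k\|^2$ and $\mathbf G_k(u,v)=\Phi_k(u)+\Psi_k(v)$, start from some $v_0\in\operatorname{dom}\omega^\star$ and for $j\ge0$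 set $v_{j+1}=\operatorname{prox}_{\tau_j^{-1}\omega^\star}\big(v_j-\tau_j^{-1}A(\lambda_kA^\top v_j-\tilde y_k)\big)$ with $\tau_j>0$ satisfying $\frac{\lambda_k}2\|A^\top(v_{j+1}-v_j)\|^2\le\frac{\tau_j}2\|v_{j+1}-v_j\|^2$, and $z_j=\tilde y_k-\lambda_kA^\top v_j$. Let $J_k$ be the smallest $j$ with $\mathbf G_k(z_j,v_j)\le\epsilon_k$, where $\epsilon_0=\mathcal E_0$ and for $k\ge1$ $\epsilon_k=\mathcal E_0\beta_kk^{-p}+\frac{\rho_k}2\|z_j-y_k\|^2$; set $x_k=z_{J_k}$ (with this $\epsilon_k$). The sequences are such that $f(x_k)-f(y_k)-\langle\nabla f(y_k),x_k-y_k\rangle\le\frac{B_k}2\|x_k-y_k\|^2$. Finally $x^\circ_k=x_{k-1}+\alpha_k^{-1}(x_k-x_{k-1})$. Assume moreover: for each $k$, $\Psi_k$ has a nonempty set of minimizers and satisfies quadratic growth with a constant $\kappa_k$, where $\inf_k\kappa_k>\kappa_{\min}$ for some $\kappa_{\min}>0$; and all inner step parameters satisfy $\sup_{k,j}\tau_j^{(k)}\le\bar\tau_{\max}<\infty$. Count one call to $\nabla f$ per outer iteration and one call to $\operatorname{prox}_{\cdot\,\omega^\star}$ per inner iteration, so that the total number of such calls through outer iteration $k$ is $\sum_{l=0}^k(J_l+1)$. Then there exist constants $C,\varepsilon_1>0$ (independent of $\varepsilon$) such that for every $\varepsilon\in(0,\varepsilon_1]$: (i) there exists $k\ge0$ with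 $F(x_k)-F(\bar x)\le\varepsilon$ and $\sum_{l=0}^k(J_l+1)\le C\varepsilon^{-1/2}\ln(1/\varepsilon)$, i.e. the total number of calls is $\mathcal O(\varepsilon^{-1/2}\ln(\varepsilon^{-1}))$; (ii) there exists $k\ge0$ with $\operatorname{dist}(\mathbf 0\,|\,\partial_{\epsilon_k}F(x_k))\le\varepsilon$ and $\sum_{l=0}^k(J_l+1)\le C\varepsilon^{-1}\ln(1/\varepsilon)$, i.e. the total number of calls is $\mathcal O(\varepsilon^{-1}\ln(\varepsilon^{-1}))$.
   Context: $\omega^\star$ is the Fenchel conjugate of $\omega$; $\operatorname{prox}_{\mu h}(x)=\operatorname{argmin}_z\{h(z)+\frac1{2\mu}\|z-x\|^2\}$. $L$-Lipschitz smooth: $f(u)-f(w)-\langle\nabla f(w),u-w\rangle\le\frac L2\|u-w\|^2$. A function $\Psi$ with nonempty minimizer set $S$ satisfies quadratic growth with constant $\kappa>0$ if $\Psi(v)\ge\min\Psi+\frac\kappa2\operatorname{dist}(v|S)^2$ for all $v$. For proper $h$ and $\epsilon\ge0$, $\partial_\epsilon h(\bar x)=\{w:\langle w,u-\bar x\rangle\le h(u)-h(\bar x)+\epsilon\ \forall u\}$ for $\bar x\in\operatorname{dom}h$, $\emptyset$ otherwise. *)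

theory Defs
  imports "HOL-Analysis.Analysis"
begin

definition fconj :: "('a::real_inner \<Rightarrow> real) \<Rightarrow> 'a \<Rightarrow> ereal" where
  "fconj h v = (SUP u. ereal (inner v u - h u))"

definition edom :: "('a \<Rightarrow> ereal) \<Rightarrow> 'a set" where
  "edom h = {v. h v < \<infinity>}"

definition prox_set :: "('a::real_normed_vector \<Rightarrow> ereal) \<Rightarrow> real \<Rightarrow> 'a \<Rightarrow> 'a set" where
  "prox_set h \<mu> x = {z. \<forall>w. h z + ereal (norm (z - x)^2 / (2*\<mu>)) \<le> h w + ereal (norm (w - x)^2 / (2*\<mu>))}"

definition minimizers :: "('a \<Rightarrow> ereal) \<Rightarrow> 'a set" where
  "minimizers \<Psi> = {v. \<forall>w. \<Psi> v \<le> \<Psi> w}"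

definition quad_growth :: "('a::metric_space \<Rightarrow> ereal) \<Rightarrow> real \<Rightarrow> bool" where
  "quad_growth \<Psi> \<kappa> \<longleftrightarrow> \<kappa> > 0 \<and> minimizers \<Psi> \<noteq> {} \<and>
     (\<forall>v. \<forall>s\<in>minimizers \<Psi>. \<Psi> v \<ge> \<Psi> s + ereal (\<kappa> / 2 * (infdist v (minimizers \<Psi>))^2))"

definition eps_subdiff :: "('a::real_inner \<Rightarrow> real) \<Rightarrow> real \<Rightarrow> 'a \<Rightarrow> 'a set" where
  "eps_subdiff h \<epsilon> x = {w. \<forall>u. inner w (u - x) \<le> h u - h x + \<epsilon>}"

definition Psi_in :: "real^'n^'m \<Rightarrow> (real^'m \<Rightarrow> real) \<Rightarrow> real \<Rightarrow> real^'n \<Rightarrow> real^'m \<Rightarrow> ereal" where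
  "Psi_in A \<omega> lam yt v =
     ereal (norm (lam *\<^sub>R (transpose A *v v) - yt)^2 / (2*lam)) + fconj \<omega> v - ereal (norm yt ^ 2 / (2*lam))"

definition Phi_in :: "real^'n^'m \<Rightarrow> (real^'m \<Rightarrow> real) \<Rightarrow> real \<Rightarrow> real^'n \<Rightarrow> real^'n \<Rightarrow> real" where
  "Phi_in A \<omega> lam yt u = \<omega> (A *v u) + norm (u - yt)^2 / (2*lam)"

definition G_in :: "real^'n^'m \<Rightarrow> (real^'m \<Rightarrow> real) \<Rightarrow> real \<Rightarrow> real^'n \<Rightarrow> real^'n \<Rightarrow> real^'m \<Rightarrow> ereal" where
  "G_in A \<omega> lam yt u v = ereal (Phi_in A \<omega> lam yt u) + Psi_in A \<omega> lam yt v"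

end

theory Submission
  imports Defs "HOL-Analysis.Analysis"
begin

lemma fconj_ge: "ereal (inner v u - h u) \<le> fconj h v"
  unfolding fconj_def by (rule SUP_upper) auto

lemma fconj_not_minf: "fconj h v \<noteq> -\<infinity>"
  using fconj_ge[of v 0 h] by auto

lemma fconj_le_iff: "fconj h v \<le> ereal c \<longleftrightarrow> (\<forall>u. inner v u - h u \<le> c)"
  unfolding fconj_def by (auto simp: SUP_le_iff)

lemma fconj_dom_norm:
  fixes \<omega> :: "'a::real_inner \<Rightarrow> real"
  assumes lip: "K-lipschitz_on UNIV \<omega>" and fin: "fconj \<omega> v < \<infinity>"
  shows "norm v \<le> K"
proof (rule ccontr)
  assume "\<not> norm v \<le> K"
  then have nv: "norm v > K" by simp
  have K0: "K \<ge> 0" using lip by (simp add: lipschitz_on_def)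
  obtain c where c: "fconj \<omega> v = ereal c" using fin fconj_not_minf[of \<omega> v] by (cases "fconj \<omega> v") auto
  have key: "t * norm v * (norm v - K) - \<omega> 0 \<le> c" if t: "t \<ge> 0" for t
  proof -
    have "\<forall>u. inner v u - \<omega> u \<le> c" using c fconj_le_iff[of \<omega> v c] by auto
    then have "inner v (t *\<^sub>R v) - \<omega> (t *\<^sub>R v) \<le> c" by blast
    moreover have "dist (\<omega> (t *\<^sub>R v)) (\<omega> 0) \<le> K * dist (t *\<^sub>R v) 0"
      using lip unfolding lipschitz_on_def by blast
    then have "\<omega> (t *\<^sub>R v) \<le> \<omega> 0 + K * (t * norm v)" using t by (simp add: dist_norm abs_le_iff)
    moreover have "inner v (t *\<^sub>R v) = t * (norm v * norm v)" using dot_square_norm[of v] by (simp add: power2_eq_square)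
    ultimately have "t * (norm v * norm v) - \<omega> 0 - K * (t * norm v) \<le> c" by linarith
    then show ?thesis by (simp add: algebra_simps)
  qed
  have pos: "norm v * (norm v - K) > 0" using nv K0 by (intro mult_pos_pos) auto
  define t where "t = (\<bar>c\<bar> + \<bar>\<omega> 0\<bar> + 1) / (norm v * (norm v - K))"
  have "t \<ge> 0" unfolding t_def using pos by simp
  from key[OF this] have "t * (norm v * (norm v - K)) - \<omega> 0 \<le> c" by (simp add: mult.assoc)
  moreover have "t * (norm v * (norm v - K)) = \<bar>c\<bar> + \<bar>\<omega> 0\<bar> + 1" unfolding t_def using pos by (metis nonzero_eq_divide_eq order_less_irrefl)
  ultimately show False by linarith
qed

lemma fenchel_moreau_le:
  fixes \<omega> :: "'a::euclidean_space \<Rightarrow> real"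
  assumes conv: "convex_on UNIV \<omega>" and cont: "continuous_on UNIV \<omega>"
    and sub: "\<forall>w. fconj \<omega> w \<ge> fconj \<omega> v + ereal (inner u (w - v))"
    and fin: "fconj \<omega> v = ereal c"
  shows "\<omega> u + c \<le> inner u v"
proof (rule field_le_epsilon)
  fix \<delta> :: real assume d: "\<delta> > 0"
  define S where "S = epigraph UNIV \<omega>"
  have cS: "convex S" unfolding S_def using conv by (simp add: convex_epigraph)
  have S_eq: "S = {xy. \<omega> (fst xy) \<le> snd xy}" unfolding S_def epigraph_def by auto
  have clS: "closed S" unfolding S_eq
    by (intro closed_Collect_le continuous_on_compose2[OF cont] continuous_intros) auto
  have zS: "(u, \<omega> u - \<delta>) \<notin> S" using d unfolding S_eq by auto
  obtain a b where ab: "a \<bullet> (u, \<omega> u - \<delta>) < b" "\<forall>x\<in>S. b < a \<bullet> x"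
    using separating_hyperplane_closed_point[OF cS clS zS] by blast
  obtain g cc where a: "a = (g, cc)" by (cases a)
  have h1: "inner g u + cc * (\<omega> u - \<delta>) < b" using ab(1) a by (simp add: inner_Pair)
  have h2: "b < inner g x + cc * \<omega> x" for x
    using ab(2)[rule_format, of "(x, \<omega> x)"] a by (simp add: inner_Pair S_eq)
  have "cc * \<delta> > 0" using h1 h2[of u] by (simp add: algebra_simps)
  then have cc: "cc > 0" using d by (simp add: zero_less_mult_iff)
  define \<gamma> where "\<gamma> = - (1/cc) *\<^sub>R g"
  have "inner \<gamma> x - \<omega> x \<le> inner \<gamma> u - \<omega> u + \<delta>" for x
  proof -
    have "inner g u + cc * (\<omega> u - \<delta>) < inner g x + cc * \<omega> x" using h1 h2[of x] by linarith
    then have "(inner g u + cc * (\<omega> u - \<delta>)) / cc < (inner g x + cc * \<omega> x) / cc"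
      using cc by (simp add: divide_strict_right_mono)
    moreover have "(inner g u + cc * (\<omega> u - \<delta>)) / cc = inner g u / cc + \<omega> u - \<delta>"
      "(inner g x + cc * \<omega> x) / cc = inner g x / cc + \<omega> x" using cc by (simp_all add: field_simps)
    moreover have "inner \<gamma> x = - (inner g x / cc)" "inner \<gamma> u = - (inner g u / cc)"
      unfolding \<gamma>_def by (simp_all add: inner_commute)
    ultimately show ?thesis by linarith
  qed
  then have "fconj \<omega> \<gamma> \<le> ereal (inner \<gamma> u - \<omega> u + \<delta>)"
    using fconj_le_iff[of \<omega> \<gamma>] by (simp add: inner_commute)
  moreover have "fconj \<omega> \<gamma> \<ge> ereal (c + inner u (\<gamma> - v))" using sub fin by auto
  ultimately have "ereal (c + inner u (\<gamma> - v)) \<le> ereal (inner \<gamma> u - \<omega> u + \<delta>)" by (meson order_trans)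
  then have "c + inner u (\<gamma> - v) \<le> inner \<gamma> u - \<omega> u + \<delta>" by simp
  then show "\<omega> u + c \<le> inner u v + \<delta>" by (simp add: inner_diff_right inner_commute)
qed

lemma inner_transpose: "inner (transpose A *v (v::real^'m)) (u::real^'n) = inner v ((A::real^'n^'m) *v u)"
  by (simp add: dot_lmul_matrix)

lemma quad_id:
  fixes P Q Y :: "'a::real_inner"
  assumes "lam > 0"
  shows "norm (lam *\<^sub>R Q - Y)^2/(2*lam) - norm (lam *\<^sub>R P - Y)^2/(2*lam) - inner (lam *\<^sub>R P - Y) (Q - P)
         = lam/2 * norm (Q - P)^2"
proof -
  have "norm (lam *\<^sub>R Q - Y)^2 - norm (lam *\<^sub>R P - Y)^2 - 2*lam * inner (lam *\<^sub>R P - Y) (Q - P)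
         = lam^2 * norm (Q - P)^2"
    unfolding power2_norm_eq_inner by (simp add: inner_diff_left inner_diff_right inner_commute algebra_simps power2_eq_square)
  then show ?thesis using assms by (simp add: field_simps power2_eq_square)
qed

lemma sq_id3:
  fixes a b w :: "'a::real_inner"
  shows "norm (w - a)^2 = norm (w - b)^2 + 2 * inner (w - b) (b - a) + norm (b - a)^2"
  by (simp add: power2_norm_eq_inner inner_diff_left inner_diff_right inner_commute algebra_simps)

lemma sq_id_s:
  fixes b x w :: "'a::real_inner"
  shows "norm (b + s *\<^sub>R (w - b) - x)^2 = norm (b - x)^2 + 2 * s * inner (b - x) (w - b) + s^2 * norm (w - b)^2"
  unfolding power2_norm_eq_inner by (simp add: inner_diff_left inner_diff_right inner_add_left inner_add_right inner_commute algebra_simps power2_eq_square)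

lemma le_limit_s:
  fixes a b c :: real
  assumes "\<And>s. 0 < s \<Longrightarrow> s \<le> 1 \<Longrightarrow> a \<le> b + s * c" and "c \<ge> 0"
  shows "a \<le> b"
proof (rule field_le_epsilon)
  fix e :: real assume e: "e > 0"
  define s where "s = min 1 (e / (c + 1))"
  have s: "0 < s" "s \<le> 1" unfolding s_def using e assms(2) by auto
  have "s * c \<le> (e / (c+1)) * c" unfolding s_def using assms(2) e by (intro mult_right_mono) auto
  also have "\<dots> \<le> e" using e assms(2) by (simp add: field_simps)
  finally show "a \<le> b + e" using assms(1)[OF s] by linarith
qed

lemma fconj_convex:
  assumes "fconj h v = ereal cv" "fconj h w = ereal cw" "0 \<le> s" "s \<le> 1"
  shows "fconj h ((1-s) *\<^sub>R v + s *\<^sub>R w) \<le> ereal ((1-s)*cv + s*cw)"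
proof -
  have v: "inner v u - h u \<le> cv" and w: "inner w u - h u \<le> cw" for u
    using assms(1,2) fconj_le_iff[of h v cv] fconj_le_iff[of h w cw] by auto
  have "inner ((1-s) *\<^sub>R v + s *\<^sub>R w) u - h u = (1-s) * (inner v u - h u) + s * (inner w u - h u)" for u
    by (simp add: inner_add_left algebra_simps)
  moreover have "(1-s) * (inner v u - h u) + s * (inner w u - h u) \<le> (1-s)*cv + s*cw" for u
    using v[of u] w[of u] assms(3,4) by (intro add_mono mult_left_mono) auto
  ultimately show ?thesis using fconj_le_iff by metis
qed

lemma prox_ineq:
  assumes "b \<in> prox_set h (1/t) x" "t > 0"
  shows "h b + ereal (t/2 * norm (b - x)^2) \<le> h w + ereal (t/2 * norm (w - x)^2)"
  using assms unfolding prox_set_def by (auto simp: field_simps)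

lemma prox_fin:
  assumes "b \<in> prox_set (fconj h) (1/t) x" "t > 0" "fconj h a = ereal ca"
  shows "\<exists>cb. fconj h b = ereal cb"
proof -
  have "fconj h b + ereal (t/2 * norm (b - x)^2) \<le> ereal (ca + t/2 * norm (a - x)^2)"
    using prox_ineq[OF assms(1,2), of a] assms(3) by simp
  then have "fconj h b \<noteq> \<infinity>" by auto
  then show ?thesis using fconj_not_minf[of h b] by (cases "fconj h b") auto
qed

lemma three_point:
  assumes b: "b \<in> prox_set (fconj h) (1/t) x" and t: "t > 0" and cb: "fconj h b = ereal cb"
    and cw: "fconj h w = ereal cw"
  shows "cb + t * inner (w - b) (x - b) \<le> cw"
proof -
  have "cb + t * inner (w - b) (x - b) \<le> cw + s * (t/2 * norm (w - b)^2)" if s: "0 < s" "s \<le> 1" for s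
  proof -
    let ?ws = "b + s *\<^sub>R (w - b)"
    have eq: "?ws = (1-s) *\<^sub>R b + s *\<^sub>R w" by (simp add: algebra_simps)
    have "fconj h ?ws \<le> ereal ((1-s)*cb + s*cw)" unfolding eq using fconj_convex[OF cb cw] s by auto
    then have "fconj h ?ws + ereal (t/2 * norm (?ws - x)^2) \<le> ereal ((1-s)*cb + s*cw) + ereal (t/2 * norm (?ws - x)^2)"
      by (rule add_mono[OF _ order_refl])
    then have p2: "fconj h ?ws + ereal (t/2 * norm (?ws - x)^2) \<le> ereal ((1-s)*cb + s*cw + t/2 * norm (?ws - x)^2)"
      by simp
    have p1: "ereal (cb + t/2 * norm (b - x)^2) \<le> fconj h ?ws + ereal (t/2 * norm (?ws - x)^2)"
      using prox_ineq[OF b t, of ?ws] cb by simp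
    have "ereal (cb + t/2 * norm (b - x)^2) \<le> ereal ((1-s)*cb + s*cw + t/2 * norm (?ws - x)^2)"
      using order_trans[OF p1 p2] .
    then have i: "cb + t/2 * norm (b - x)^2 \<le> (1-s)*cb + s*cw + t/2 * norm (?ws - x)^2" by simp
    have "s * cb \<le> s * (cw + t * inner (b - x) (w - b) + s * (t/2 * norm (w - b)^2))"
      using i unfolding sq_id_s by (simp add: algebra_simps power2_eq_square)
    then have "cb \<le> cw + t * inner (b - x) (w - b) + s * (t/2 * norm (w - b)^2)"
      using s by (simp add: mult_le_cancel_left_pos)
    moreover have "t * inner (w - b) (x - b) = - (t * inner (b - x) (w - b))"
      by (simp add: inner_diff_left inner_diff_right inner_commute algebra_simps)
    ultimately show ?thesis by linarith
  qed
  from le_limit_s[OF this] show ?thesis using t by simp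
qed

declare transpose_matrix_vector[simp del]

definition hq :: "real^'n^'m \<Rightarrow> real \<Rightarrow> real^'n \<Rightarrow> real^'m \<Rightarrow> real" where
  "hq A lam yt v = norm (lam *\<^sub>R (transpose A *v v) - yt)^2/(2*lam)"

lemma Psi_fin: "fconj \<omega> v = ereal c \<Longrightarrow>
  Psi_in A \<omega> lam yt v = ereal (hq A lam yt v + c - norm yt^2/(2*lam))"
  unfolding Psi_in_def hq_def by simp

lemma Psi_inf: "fconj \<omega> v = \<infinity> \<Longrightarrow> Psi_in A \<omega> lam yt v = \<infinity>"
  unfolding Psi_in_def by simp

lemma hq_expand:
  assumes "lam > 0"
  shows "hq A lam yt w - hq A lam yt a - inner (A *v (lam *\<^sub>R (transpose A *v a) - yt)) (w - a)
     = lam/2 * norm (transpose A *v (w - a))^2"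
proof -
  have "inner (A *v (lam *\<^sub>R (transpose A *v a) - yt)) (w - a)
      = inner (lam *\<^sub>R (transpose A *v a) - yt) (transpose A *v w - transpose A *v a)"
    using inner_transpose[of A "w - a" "lam *\<^sub>R (transpose A *v a) - yt"]
    by (simp add: inner_commute matrix_vector_mult_diff_distrib)
  moreover have "transpose A *v (w - a) = transpose A *v w - transpose A *v a"
    by (simp add: matrix_vector_mult_diff_distrib)
  ultimately show ?thesis unfolding hq_def using quad_id[OF assms] by simp
qed

lemma hq_expand_le:
  assumes "lam > 0"
  shows "hq A lam yt a + inner (A *v (lam *\<^sub>R (transpose A *v a) - yt)) (w - a) \<le> hq A lam yt w"
proof -
  have "0 \<le> lam/2 * norm (transpose A *v (w - a))^2" using assms by simp
  then show ?thesis using hq_expand[OF assms, of A yt w a] by linarith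
qed

lemma descent:
  fixes A :: "real^'n^'m"
  assumes lam: "lam > 0" and t: "t > 0"
    and cb: "fconj \<omega> b = ereal cb" and cw: "fconj \<omega> w = ereal cw"
    and b: "b \<in> prox_set (fconj \<omega>) (1/t) (a - (1/t) *\<^sub>R (A *v (lam *\<^sub>R (transpose A *v a) - yt)))"
    and tc: "lam / 2 * norm (transpose A *v (b - a))^2 \<le> t / 2 * norm (b - a)^2"
  shows "hq A lam yt b + cb \<le> hq A lam yt w + cw + t/2 * norm (w - a)^2 - t/2 * norm (w - b)^2"
proof -
  define g where "g = A *v (lam *\<^sub>R (transpose A *v a) - yt)"
  have tp: "cb + t * inner (w - b) ((a - (1/t) *\<^sub>R g) - b) \<le> cw"
    using three_point[OF b[folded g_def] t cb cw] .
  have e1: "t * inner (w - b) ((a - (1/t) *\<^sub>R g) - b) = t * inner (w - b) (a - b) - inner (w - b) g"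
    using t by (simp add: inner_diff_right algebra_simps)
  have hb: "hq A lam yt b = hq A lam yt a + inner g (b - a) + lam/2 * norm (transpose A *v (b - a))^2"
    using hq_expand[OF lam, of A yt b a] unfolding g_def by simp
  have hw: "hq A lam yt a + inner g (w - a) \<le> hq A lam yt w"
    using hq_expand_le[OF lam, of A yt a w] unfolding g_def by simp
  have s3: "norm (w - a)^2 = norm (w - b)^2 + 2 * inner (w - b) (b - a) + norm (b - a)^2" by (rule sq_id3)
  have i1: "inner g (w - a) - inner g (b - a) = inner (w - b) g"
    by (simp add: inner_diff_right inner_commute)
  have i2: "t * inner (w - b) (a - b) = - (t * inner (w - b) (b - a))"
    by (simp add: inner_diff_right algebra_simps)
  have s3': "t/2 * norm (w - a)^2 = t/2 * norm (w - b)^2 + t * inner (w - b) (b - a) + t/2 * norm (b - a)^2"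
    unfolding s3 by (simp add: algebra_simps)
  show ?thesis using tp e1 hb hw s3' i1 i2 tc by linarith
qed

lemma gid:
  fixes Q Y :: "'a::real_inner"
  assumes "lam > 0"
  shows "norm ((Y - lam *\<^sub>R Q) - Y)^2/(2*lam) + norm (lam *\<^sub>R Q - Y)^2/(2*lam) - norm Y^2/(2*lam)
       = - inner Q (Y - lam *\<^sub>R Q)"
proof -
  have "norm ((Y - lam *\<^sub>R Q) - Y)^2 + norm (lam *\<^sub>R Q - Y)^2 - norm Y^2 = - 2*lam * inner Q (Y - lam *\<^sub>R Q)"
    unfolding power2_norm_eq_inner
    by (simp add: inner_diff_left inner_diff_right inner_commute algebra_simps power2_eq_square)
  then have "(norm ((Y - lam *\<^sub>R Q) - Y)^2 + norm (lam *\<^sub>R Q - Y)^2 - norm Y^2) / (2*lam)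
     = (- 2*lam * inner Q (Y - lam *\<^sub>R Q)) / (2*lam)" by (rule arg_cong)
  then show ?thesis using assms by (simp add: diff_divide_distrib add_divide_distrib)
qed

lemma G_fin:
  fixes A :: "real^'n^'m"
  assumes lam: "lam > 0" and cb: "fconj \<omega> b = ereal cb"
  shows "G_in A \<omega> lam yt (yt - lam *\<^sub>R (transpose A *v b)) b
       = ereal (\<omega> (A *v (yt - lam *\<^sub>R (transpose A *v b))) + cb - inner b (A *v (yt - lam *\<^sub>R (transpose A *v b))))"
proof -
  let ?Q = "transpose A *v b"
  have "inner b (A *v (yt - lam *\<^sub>R ?Q)) = inner ?Q (yt - lam *\<^sub>R ?Q)"
    using inner_transpose[of A b "yt - lam *\<^sub>R ?Q"] by simp
  moreover have "norm ((yt - lam *\<^sub>R ?Q) - yt)^2/(2*lam) + norm (lam *\<^sub>R ?Q - yt)^2/(2*lam) - norm yt^2/(2*lam)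
       = - inner ?Q (yt - lam *\<^sub>R ?Q)" by (rule gid[OF lam])
  ultimately show ?thesis
    unfolding G_in_def Phi_in_def Psi_fin[OF cb] hq_def by (simp add: algebra_simps)
qed

lemma gap_bound:
  fixes A :: "real^'n^'m" and \<omega> :: "real^'m \<Rightarrow> real"
  assumes conv: "convex_on UNIV \<omega>" and lip: "K-lipschitz_on UNIV \<omega>"
    and lam: "lam > 0" and t: "t > 0" and cb: "fconj \<omega> b = ereal cb"
    and b: "b \<in> prox_set (fconj \<omega>) (1/t) (a - (1/t) *\<^sub>R (A *v (lam *\<^sub>R (transpose A *v a) - yt)))"
    and NA: "\<forall>x. norm (A *v x) \<le> NA * norm x" and NT: "\<forall>y. norm (transpose A *v y) \<le> NT * norm y"
    and NA0: "NA \<ge> 0"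
  shows "G_in A \<omega> lam yt (yt - lam *\<^sub>R (transpose A *v b)) b \<le> ereal (2*K*(t + lam*NA*NT) * norm (b - a))"
proof -
  define g where "g = A *v (lam *\<^sub>R (transpose A *v a) - yt)"
  define u where "u = t *\<^sub>R ((a - (1/t) *\<^sub>R g) - b)"
  define z where "z = yt - lam *\<^sub>R (transpose A *v b)"
  have K0: "K \<ge> 0" using lip by (simp add: lipschitz_on_def)
  have sub: "\<forall>w. fconj \<omega> w \<ge> fconj \<omega> b + ereal (inner u (w - b))"
  proof
    fix w show "fconj \<omega> w \<ge> fconj \<omega> b + ereal (inner u (w - b))"
    proof (cases "fconj \<omega> w")
      case (real cw)
      have "cb + t * inner (w - b) ((a - (1/t) *\<^sub>R g) - b) \<le> cw"
        using three_point[OF b[folded g_def] t cb real] .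
      moreover have "inner u (w - b) = t * inner (w - b) ((a - (1/t) *\<^sub>R g) - b)"
        unfolding u_def by (simp add: inner_commute)
      ultimately show ?thesis using cb real by simp
    next
      case PInf then show ?thesis by simp
    next
      case MInf then show ?thesis using fconj_not_minf by blast
    qed
  qed
  have cont: "continuous_on UNIV \<omega>" using lip by (rule lipschitz_on_continuous_on)
  have fm: "\<omega> u + cb \<le> inner u b" using fenchel_moreau_le[OF conv cont sub cb] .
  have nb: "norm b \<le> K" using fconj_dom_norm[OF lip] cb by simp
  have "norm (\<omega> (A *v z) - \<omega> u) \<le> K * norm (A *v z - u)"
    using lip unfolding lipschitz_on_def dist_norm by blast
  then have l1: "\<omega> (A *v z) - \<omega> u \<le> K * norm (A *v z - u)" by simp
  have l2: "inner b (u - A *v z) \<le> K * norm (u - A *v z)"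
  proof -
    have "norm b * norm (u - A *v z) \<le> K * norm (u - A *v z)" using nb by (simp add: mult_right_mono)
    then show ?thesis using Cauchy_Schwarz_ineq2[of b "u - A *v z"] by linarith
  qed
  have ueq: "u - A *v z = t *\<^sub>R (a - b) - lam *\<^sub>R (A *v (transpose A *v (a - b)))"
    unfolding u_def z_def g_def using t
    by (simp add: algebra_simps matrix_vector_mult_diff_distrib matrix_vector_mult_scaleR)
  have "norm (u - A *v z) \<le> t * norm (a - b) + lam * (NA * (NT * norm (a - b)))"
  proof -
    have "norm (u - A *v z) \<le> norm (t *\<^sub>R (a - b)) + norm (lam *\<^sub>R (A *v (transpose A *v (a - b))))"
      unfolding ueq by (rule norm_triangle_ineq4)
    moreover have "norm (A *v (transpose A *v (a - b))) \<le> NA * (NT * norm (a - b))"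
      using NA NT NA0 by (meson mult_left_mono order_trans)
    ultimately show ?thesis using t lam by (simp add: mult_left_mono order_trans add_mono)
  qed
  then have nu: "norm (u - A *v z) \<le> (t + lam*NA*NT) * norm (b - a)"
    by (simp add: norm_minus_commute algebra_simps)
  have "\<omega> (A *v z) + cb - inner b (A *v z) \<le> \<omega> (A *v z) - \<omega> u + inner b (u - A *v z)"
    using fm by (simp add: inner_diff_right inner_commute)
  also have "\<dots> \<le> K * norm (A *v z - u) + K * norm (u - A *v z)" using l1 l2 by linarith
  also have "\<dots> = 2 * K * norm (u - A *v z)" by (simp add: norm_minus_commute)
  also have "\<dots> \<le> 2 * K * ((t + lam*NA*NT) * norm (b - a))" using nu K0 by (simp add: mult_left_mono)
  finally show ?thesis unfolding G_fin[OF lam cb] z_def by (simp add: mult.assoc)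
qed

lemma infdist_ge: "S \<noteq> {} \<Longrightarrow> (\<And>s. s \<in> S \<Longrightarrow> c \<le> dist a s) \<Longrightarrow> c \<le> infdist a S"
  unfolding infdist_notempty by (rule cINF_greatest) auto

lemma contr_arith:
  fixes D E t \<kappa> T \<kappa>0 :: real
  assumes "D^2 * (t + \<kappa>) \<le> t * E^2" "0 < t" "t \<le> T" "0 < \<kappa>0" "\<kappa>0 \<le> \<kappa>" "D \<ge> 0" "E \<ge> 0"
  shows "D \<le> sqrt (T/(T+\<kappa>0)) * E"
proof -
  have "\<kappa>0 * t \<le> \<kappa> * T" using assms by (intro mult_mono) auto
  then have tk: "t*(T+\<kappa>0) \<le> T*(t+\<kappa>)" by (simp add: algebra_simps)
  have "D^2 * (T+\<kappa>0) * (t+\<kappa>) = (D^2 * (t+\<kappa>)) * (T+\<kappa>0)" by (simp add: algebra_simps)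
  also have "\<dots> \<le> (t * E^2) * (T+\<kappa>0)" using assms by (intro mult_right_mono) auto
  also have "\<dots> = (t*(T+\<kappa>0)) * E^2" by (simp add: algebra_simps)
  also have "\<dots> \<le> (T*(t+\<kappa>)) * E^2" using tk by (intro mult_right_mono) auto
  finally have "D^2 * (T+\<kappa>0) * (t+\<kappa>) \<le> (T * E^2) * (t+\<kappa>)" by (simp add: algebra_simps)
  then have "D^2 * (T+\<kappa>0) \<le> T * E^2" using assms by (simp add: mult_le_cancel_right_pos)
  then have "D^2 \<le> (T/(T+\<kappa>0)) * E^2" using assms by (simp add: field_simps)
  then have "sqrt (D^2) \<le> sqrt ((T/(T+\<kappa>0)) * E^2)" by (rule real_sqrt_le_mono)
  then have "sqrt (D^2) \<le> sqrt (T/(T+\<kappa>0)) * sqrt (E^2)" by (simp only: real_sqrt_mult)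
  then show ?thesis using assms by simp
qed

lemma inner_loop:
  fixes A :: "real^'n^'m" and \<omega> :: "real^'m \<Rightarrow> real" and v :: "nat \<Rightarrow> real^'m" and \<tau> :: "nat \<Rightarrow> real"
  assumes conv: "convex_on UNIV \<omega>" and lip: "K-lipschitz_on UNIV \<omega>"
    and lam: "lam > 0" and lamL: "lam \<le> \<Lambda>"
    and QG: "quad_growth (Psi_in A \<omega> lam yt) \<kappa>" and k0: "\<kappa>0 \<le> \<kappa>" "\<kappa>0 > 0"
    and \<tau>pos: "\<forall>j. \<tau> j > 0" and \<tau>T: "\<forall>j. \<tau> j \<le> T"
    and v0: "v 0 \<in> edom (fconj \<omega>)"
    and step: "\<forall>j. v (Suc j) \<in> prox_set (fconj \<omega>) (1 / \<tau> j)
                   (v j - (1 / \<tau> j) *\<^sub>R (A *v (lam *\<^sub>R (transpose A *v v j) - yt)))"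
    and tc: "\<forall>j. lam / 2 * norm (transpose A *v (v (Suc j) - v j))^2 \<le> \<tau> j / 2 * norm (v (Suc j) - v j)^2"
    and NA: "\<forall>x. norm (A *v x) \<le> NA * norm x" and NT: "\<forall>y. norm (transpose A *v y) \<le> NT * norm y"
    and NA0: "NA \<ge> 0" and NT0: "NT \<ge> 0"
  shows "G_in A \<omega> lam yt (yt - lam *\<^sub>R (transpose A *v v (Suc j))) (v (Suc j))
           \<le> ereal (8*K^2*(T + \<Lambda>*NA*NT) * sqrt (T/(T+\<kappa>0)) ^ j)"
proof -
  define r where "r = sqrt (T/(T+\<kappa>0))"
  define S where "S = minimizers (Psi_in A \<omega> lam yt)"
  have K0: "K \<ge> 0" using lip by (simp add: lipschitz_on_def)
  have T0: "T > 0" using \<tau>pos \<tau>T by (meson less_le_trans)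
  have r0: "r > 0" unfolding r_def using T0 k0 by simp
  have \<kappa>: "\<kappa> > 0" and Sne: "S \<noteq> {}"
    and QGi: "\<forall>w. \<forall>s\<in>S. Psi_in A \<omega> lam yt w \<ge> Psi_in A \<omega> lam yt s + ereal (\<kappa> / 2 * (infdist w S)^2)"
    using QG unfolding quad_growth_def S_def by auto
  have fin: "\<exists>c. fconj \<omega> (v j) = ereal c" for j
  proof (induction j)
    case 0
    then show ?case using v0 fconj_not_minf[of \<omega> "v 0"] unfolding edom_def by (cases "fconj \<omega> (v 0)") auto
  next
    case (Suc j)
    then obtain c where "fconj \<omega> (v j) = ereal c" by blast
    then show ?case using prox_fin[OF step[rule_format, of j] \<tau>pos[rule_format, of j]] by blast
  qed
  then obtain cv where cv: "\<And>j. fconj \<omega> (v j) = ereal (cv j)" by metis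
  have sfin: "\<exists>cs. fconj \<omega> s = ereal cs" if s: "s \<in> S" for s
  proof -
    have "Psi_in A \<omega> lam yt s \<le> Psi_in A \<omega> lam yt (v 0)" using s unfolding S_def minimizers_def by auto
    then have "fconj \<omega> s \<noteq> \<infinity>" using Psi_inf[of \<omega> s A lam yt] Psi_fin[OF cv[of 0], of A lam yt] by auto
    then show ?thesis using fconj_not_minf[of \<omega> s] by (cases "fconj \<omega> s") auto
  qed
  have snorm: "norm s \<le> K" if "s \<in> S" for s using sfin[OF that] fconj_dom_norm[OF lip] by fastforce
  have vnorm: "norm (v j) \<le> K" for j using cv[of j] fconj_dom_norm[OF lip] by fastforce
  have star: "\<tau> j / 2 * norm (s - v (Suc j))^2 + \<kappa>/2 * (infdist (v (Suc j)) S)^2 \<le> \<tau> j / 2 * norm (s - v j)^2"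
    if s: "s \<in> S" for s j
  proof -
    obtain cs where cs: "fconj \<omega> s = ereal cs" using sfin[OF s] by blast
    have desc: "hq A lam yt (v (Suc j)) + cv (Suc j) \<le> hq A lam yt s + cs + \<tau> j/2 * norm (s - v j)^2 - \<tau> j/2 * norm (s - v (Suc j))^2"
      using descent[OF lam \<tau>pos[rule_format, of j] cv[of "Suc j"] cs step[rule_format, of j] tc[rule_format, of j]] .
    have "Psi_in A \<omega> lam yt (v (Suc j)) \<ge> Psi_in A \<omega> lam yt s + ereal (\<kappa> / 2 * (infdist (v (Suc j)) S)^2)"
      using QGi s by blast
    then have "hq A lam yt (v (Suc j)) + cv (Suc j) \<ge> hq A lam yt s + cs + \<kappa> / 2 * (infdist (v (Suc j)) S)^2"
      unfolding Psi_fin[OF cv[of "Suc j"]] Psi_fin[OF cs] by simp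
    then show ?thesis using desc by linarith
  qed
  have contr: "infdist (v (Suc j)) S \<le> r * infdist (v j) S" for j
  proof -
    have "infdist (v (Suc j)) S / r \<le> dist (v j) s" if s: "s \<in> S" for s
    proof -
      let ?D = "infdist (v (Suc j)) S" and ?E = "norm (s - v j)" and ?F = "norm (s - v (Suc j))"
      have DF: "?D \<le> ?F" using infdist_le[OF s, of "v (Suc j)"] by (simp add: dist_norm norm_minus_commute)
      have D0: "?D \<ge> 0" by (rule infdist_nonneg)
      have "?D^2 \<le> ?F^2" using DF D0 by (simp add: power_mono)
      then have "\<tau> j * ?D^2 \<le> \<tau> j * ?F^2" using \<tau>pos by (simp add: mult_left_mono less_imp_le)
      then have "?D^2 * (\<tau> j + \<kappa>) \<le> \<tau> j * ?E^2" using star[OF s, of j] by (simp add: algebra_simps)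
      then have "?D \<le> r * ?E" unfolding r_def
        using contr_arith[of ?D "\<tau> j" \<kappa> ?E T \<kappa>0] \<tau>pos \<tau>T k0 D0 by auto
      then show ?thesis using r0 by (simp add: dist_norm norm_minus_commute field_simps)
    qed
    then have "infdist (v (Suc j)) S / r \<le> infdist (v j) S" using infdist_ge[OF Sne] by blast
    then show ?thesis using r0 by (simp add: field_simps)
  qed
  have stepb: "norm (v (Suc j) - v j) \<le> 2 * infdist (v j) S" for j
  proof -
    have "norm (v (Suc j) - v j) / 2 \<le> dist (v j) s" if s: "s \<in> S" for s
    proof -
      have "\<tau> j / 2 * norm (s - v (Suc j))^2 \<le> \<tau> j / 2 * norm (s - v j)^2"
      proof -
        have "0 \<le> \<kappa>/2 * (infdist (v (Suc j)) S)^2" using \<kappa> by simp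
        then show ?thesis using star[OF s, of j] by linarith
      qed
      then have "norm (s - v (Suc j))^2 \<le> norm (s - v j)^2" using \<tau>pos by (simp add: mult_le_cancel_left_pos)
      then have "norm (s - v (Suc j)) \<le> norm (s - v j)" by (simp add: power_mono_iff)
      moreover have "norm (v (Suc j) - v j) \<le> norm (s - v (Suc j)) + norm (s - v j)"
      proof -
        have "v (Suc j) - v j = (s - v j) - (s - v (Suc j))" by simp
        then show ?thesis using norm_triangle_ineq4[of "s - v j" "s - v (Suc j)"] by simp
      qed
      ultimately show ?thesis by (simp add: dist_norm norm_minus_commute)
    qed
    then show ?thesis using infdist_ge[OF Sne] by fastforce
  qed
  have dbound: "infdist (v j) S \<le> 2*K * r^j" for j
  proof (induction j)
    case 0
    obtain s0 where s0: "s0 \<in> S" using Sne by blast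
    have "infdist (v 0) S \<le> dist (v 0) s0" by (rule infdist_le[OF s0])
    also have "\<dots> \<le> norm (v 0) + norm s0" by (simp add: dist_norm norm_triangle_ineq4)
    also have "\<dots> \<le> 2*K" using vnorm[of 0] snorm[OF s0] by simp
    finally show ?case by simp
  next
    case (Suc j)
    have "infdist (v (Suc j)) S \<le> r * infdist (v j) S" by (rule contr)
    also have "\<dots> \<le> r * (2*K*r^j)" using Suc r0 by (simp add: mult_left_mono)
    finally show ?case by (simp add: algebra_simps)
  qed
  have gb: "G_in A \<omega> lam yt (yt - lam *\<^sub>R (transpose A *v v (Suc j))) (v (Suc j))
      \<le> ereal (2*K*(\<tau> j + lam*NA*NT) * norm (v (Suc j) - v j))"
    using gap_bound[OF conv lip lam \<tau>pos[rule_format, of j] cv[of "Suc j"] step[rule_format, of j] NA NT NA0] .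
  have c1: "\<tau> j + lam*NA*NT \<le> T + \<Lambda>*NA*NT"
    using \<tau>T lamL NA0 NT0 by (simp add: add_mono mult_right_mono)
  have c2: "norm (v (Suc j) - v j) \<le> 4*K*r^j" using stepb[of j] dbound[of j] by simp
  have "2*K*(\<tau> j + lam*NA*NT) * norm (v (Suc j) - v j) \<le> 2*K*(T + \<Lambda>*NA*NT) * (4*K*r^j)"
  proof -
    have X0: "0 \<le> \<tau> j + lam*NA*NT" using \<tau>pos[rule_format, of j] lam NA0 NT0 by simp
    have n0: "0 \<le> norm (v (Suc j) - v j)" by simp
    have "2*K*(\<tau> j + lam*NA*NT) \<le> 2*K*(T + \<Lambda>*NA*NT)" using c1 K0 by (simp add: mult_left_mono)
    then have "2*K*(\<tau> j + lam*NA*NT) * norm (v (Suc j) - v j) \<le> 2*K*(T + \<Lambda>*NA*NT) * norm (v (Suc j) - v j)"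
      using n0 by (rule mult_right_mono)
    also have "\<dots> \<le> 2*K*(T + \<Lambda>*NA*NT) * (4*K*r^j)"
      using c2 K0 X0 c1 by (intro mult_left_mono) auto
    finally show ?thesis .
  qed
  also have "\<dots> = 8*K^2*(T + \<Lambda>*NA*NT) * r^j" by (simp add: power2_eq_square algebra_simps)
  finally show ?thesis using gb unfolding r_def by (meson ereal_less_eq(3) order_trans)
qed

lemma grad_ineq:
  fixes f :: "'a::real_inner \<Rightarrow> real"
  assumes conv: "convex_on UNIV f" and der: "\<forall>u. (f has_derivative (\<lambda>h. inner (gf u) h)) (at u)"
  shows "f w + inner (gf w) (u - w) \<le> f u"
proof -
  define d where "d = u - w"
  define g where "g t = f (w + t *\<^sub>R d)" for t :: real
  have cg: "convex_on UNIV g"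
    unfolding convex_on_def g_def
  proof (intro conjI ballI allI impI)
    show "convex (UNIV :: real set)" by simp
    fix x y :: real and a b :: real assume ab: "0 \<le> a" "0 \<le> b" "a + b = 1"
    have "w + (a *\<^sub>R x + b *\<^sub>R y) *\<^sub>R d = a *\<^sub>R (w + x *\<^sub>R d) + b *\<^sub>R (w + y *\<^sub>R d)"
    proof -
      have "w = a *\<^sub>R w + b *\<^sub>R w" using ab by (simp add: scaleR_left_distrib[symmetric])
      then show ?thesis by (simp add: algebra_simps)
    qed
    then show "f (w + (a *\<^sub>R x + b *\<^sub>R y) *\<^sub>R d) \<le> a * f (w + x *\<^sub>R d) + b * f (w + y *\<^sub>R d)"
      using conv ab unfolding convex_on_def by simp
  qed
  have d1: "((\<lambda>t. w + t *\<^sub>R d) has_derivative (\<lambda>t. t *\<^sub>R d)) (at 0)"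
    by (auto intro!: derivative_eq_intros)
  have d2: "(f has_derivative (\<lambda>h. inner (gf w) h)) (at (w + 0 *\<^sub>R d))" using der by simp
  have "(g has_derivative (\<lambda>t. inner (gf w) (t *\<^sub>R d))) (at 0)"
    unfolding g_def using has_derivative_compose[OF d1 d2] by simp
  moreover have "(\<lambda>t. inner (gf w) (t *\<^sub>R d)) = (*) (inner (gf w) d)" by (rule ext) simp
  ultimately have "(g has_field_derivative (inner (gf w) d)) (at 0 within UNIV)"
    unfolding has_field_derivative_def by simp
  then have "inner (gf w) d * (1 - 0) \<le> g 1 - g 0"
    by (intro convex_on_imp_above_tangent[OF cg]) auto
  then show ?thesis unfolding g_def d_def by simp
qed

lemma grad_one_side:
  fixes f :: "'a::real_inner \<Rightarrow> real"
  assumes conv: "convex_on UNIV f" and der: "\<forall>u. (f has_derivative (\<lambda>h. inner (gf u) h)) (at u)"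
    and sm: "\<forall>u w. f u - f w - inner (gf w) (u - w) \<le> L1 / 2 * norm (u - w)^2" and L1: "L1 > 0"
  shows "norm (gf y - gf x)^2 / (2*L1) \<le> f y - f x - inner (gf x) (y - x)"
proof -
  define d where "d = gf y - gf x"
  define u where "u = y - (1/L1) *\<^sub>R d"
  have m: "f x + inner (gf x) (u - x) \<le> f u" by (rule grad_ineq[OF conv der])
  have s: "f u - f y - inner (gf y) (u - y) \<le> L1 / 2 * norm (u - y)^2" using sm by blast
  have e1: "inner (gf y) (u - y) = - inner (gf y) d / L1" unfolding u_def by simp
  have e2: "L1 / 2 * norm (u - y)^2 = norm d ^2 / (2*L1)" unfolding u_def using L1
    by (simp add: power2_eq_square field_simps)
  have e3: "inner (gf x) (u - x) = inner (gf x) (y - x) - inner (gf x) d / L1"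
    unfolding u_def by (simp add: inner_diff_right)
  have e4: "inner (gf y) d / L1 - inner (gf x) d / L1 = norm d^2 / L1"
    unfolding d_def by (simp add: diff_divide_distrib[symmetric] inner_diff_left[symmetric] power2_norm_eq_inner)
  have e5: "norm d^2 / L1 = 2 * (norm d^2 / (2*L1))" by simp
  show ?thesis using m s e1 e2 e3 e4 e5 unfolding d_def by linarith
qed

lemma grad_lip:
  fixes f :: "'a::real_inner \<Rightarrow> real"
  assumes conv: "convex_on UNIV f" and der: "\<forall>u. (f has_derivative (\<lambda>h. inner (gf u) h)) (at u)"
    and sm: "\<forall>u w. f u - f w - inner (gf w) (u - w) \<le> L / 2 * norm (u - w)^2"
  shows "norm (gf y - gf x) \<le> max L 1 * norm (y - x)"
proof -
  define L1 where "L1 = max L 1"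
  have L1: "L1 > 0" unfolding L1_def by simp
  have sm1: "\<forall>u w. f u - f w - inner (gf w) (u - w) \<le> L1 / 2 * norm (u - w)^2"
  proof (intro allI)
    fix u w :: 'a
    have "L / 2 * norm (u - w)^2 \<le> L1 / 2 * norm (u - w)^2" unfolding L1_def
      by (intro mult_right_mono) auto
    then show "f u - f w - inner (gf w) (u - w) \<le> L1 / 2 * norm (u - w)^2" using sm by smt
  qed
  have a: "norm (gf y - gf x)^2 / (2*L1) \<le> f y - f x - inner (gf x) (y - x)" by (rule grad_one_side[OF conv der sm1 L1])
  have b: "norm (gf x - gf y)^2 / (2*L1) \<le> f x - f y - inner (gf y) (x - y)" by (rule grad_one_side[OF conv der sm1 L1])
  have c: "norm (gf x - gf y) = norm (gf y - gf x)" by (rule norm_minus_commute)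
  have "inner (gf y - gf x) (y - x) = - inner (gf x) (y - x) - inner (gf y) (x - y)"
    by (simp add: inner_diff_left inner_diff_right algebra_simps)
  then have "norm (gf y - gf x)^2 / L1 \<le> inner (gf y - gf x) (y - x)" using a b c by (simp add: field_simps)
  also have "\<dots> \<le> norm (gf y - gf x) * norm (y - x)" by (rule norm_cauchy_schwarz)
  finally have h: "norm (gf y - gf x)^2 \<le> L1 * (norm (gf y - gf x) * norm (y - x))" using L1 by (simp add: field_simps)
  show ?thesis
  proof (cases "norm (gf y - gf x) = 0")
    case True then show ?thesis unfolding L1_def[symmetric] using L1 by simp
  next
    case False
    then have "norm (gf y - gf x) > 0" by simp
    then show ?thesis using h unfolding L1_def[symmetric] by (simp add: power2_eq_square algebra_simps mult_le_cancel_left_pos)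
  qed
qed

lemma gid2:
  fixes Q Y w :: "'a::real_inner"
  assumes "lam > 0"
  shows "norm (w - Y)^2/(2*lam) + norm (lam *\<^sub>R Q - Y)^2/(2*lam) + inner Q w - norm Y^2/(2*lam)
       = norm (w - (Y - lam *\<^sub>R Q))^2/(2*lam)"
proof -
  have "norm (w - Y)^2 + norm (lam *\<^sub>R Q - Y)^2 + 2*lam * inner Q w - norm Y^2 = norm (w - (Y - lam *\<^sub>R Q))^2"
    unfolding power2_norm_eq_inner
    by (simp add: inner_diff_left inner_diff_right inner_commute algebra_simps power2_eq_square)
  then have "(norm (w - Y)^2 + norm (lam *\<^sub>R Q - Y)^2 + 2*lam * inner Q w - norm Y^2) / (2*lam)
      = norm (w - (Y - lam *\<^sub>R Q))^2 / (2*lam)" by (rule arg_cong)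
  then show ?thesis using assms by (simp add: diff_divide_distrib add_divide_distrib)
qed

lemma prox_approx:
  fixes A :: "real^'n^'m" and \<omega> :: "real^'m \<Rightarrow> real"
  assumes lam: "lam > 0" and x: "x = yt - lam *\<^sub>R (transpose A *v v)"
    and G: "G_in A \<omega> lam yt x v \<le> ereal \<epsilon>"
  shows "\<omega> (A *v x) + norm (x - yt)^2/(2*lam) + norm (w - x)^2/(2*lam) \<le> \<omega> (A *v w) + norm (w - yt)^2/(2*lam) + \<epsilon>"
proof -
  have "fconj \<omega> v \<noteq> \<infinity>"
  proof
    assume "fconj \<omega> v = \<infinity>"
    then have "G_in A \<omega> lam yt x v = \<infinity>" unfolding G_in_def using Psi_inf[of \<omega> v A lam yt] by simp
    then show False using G by simp
  qed
  then obtain c where c: "fconj \<omega> v = ereal c" using fconj_not_minf[of \<omega> v] by (cases "fconj \<omega> v") auto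
  have Gr: "Phi_in A \<omega> lam yt x + (hq A lam yt v + c - norm yt^2/(2*lam)) \<le> \<epsilon>"
    using G unfolding G_in_def Psi_fin[OF c] by simp
  have fy: "inner v (A *v w) - \<omega> (A *v w) \<le> c" using c fconj_le_iff[of \<omega> v c] by auto
  have iq: "inner v (A *v w) = inner (transpose A *v v) w" using inner_transpose[of A v w] by simp
  have idn: "norm (w - yt)^2/(2*lam) + hq A lam yt v + inner (transpose A *v v) w - norm yt^2/(2*lam)
       = norm (w - x)^2/(2*lam)" unfolding hq_def x by (rule gid2[OF lam])
  show ?thesis using Gr fy iq idn unfolding Phi_in_def by linarith
qed

lemma yt_id:
  fixes w x y g :: "'a::real_inner"
  assumes L: "L > 0"
  shows "L/2 * norm (w - (y - (1/L) *\<^sub>R g))^2 - L/2 * norm (x - (y - (1/L) *\<^sub>R g))^2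
       = L/2 * norm (w - y)^2 - L/2 * norm (x - y)^2 + inner g (w - x)"
proof -
  have n: "norm (b + c *\<^sub>R g)^2 = norm b^2 + 2*c*inner b g + c^2 * norm g^2" for b c
    unfolding power2_norm_eq_inner
    by (simp add: inner_add_left inner_add_right inner_commute power2_eq_square algebra_simps)
  have e: "norm (a - (y - (1/L) *\<^sub>R g))^2 = norm (a - y)^2 + 2*(1/L)*inner (a - y) g + (1/L)^2 * norm g^2" for a
  proof -
    have "norm (a - (y - (1/L) *\<^sub>R g))^2 = norm ((a - y) + (1/L) *\<^sub>R g)^2" by (simp add: algebra_simps)
    also have "\<dots> = norm (a - y)^2 + 2*(1/L)*inner (a - y) g + (1/L)^2 * norm g^2" by (rule n)
    finally show ?thesis .
  qed
  show ?thesis unfolding e using L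
    by (simp add: inner_diff_left inner_diff_right inner_commute field_simps)
qed

lemma outer_key:
  fixes f :: "real^'n \<Rightarrow> real" and A :: "real^'n^'m" and \<omega> :: "real^'m \<Rightarrow> real"
  assumes conv: "convex_on UNIV f" and der: "\<forall>u. (f has_derivative (\<lambda>h. inner (gf u) h)) (at u)"
    and L: "Lk > 0" and yt: "yt = y - (1 / Lk) *\<^sub>R gf y"
    and pa: "\<omega> (A *v x) + norm (x - yt)^2/(2*(1/Lk)) + norm (w - x)^2/(2*(1/Lk)) \<le> \<omega> (A *v w) + norm (w - yt)^2/(2*(1/Lk)) + \<epsilon>"
    and Bc: "f x - f y - inner (gf y) (x - y) \<le> B / 2 * norm (x - y)^2" and LB: "Lk = B + \<rho>"
  shows "f x + \<omega> (A *v x) \<le> f w + \<omega> (A *v w) + Lk/2 * norm (w - y)^2 - Lk/2 * norm (w - x)^2 - \<rho>/2 * norm (x - y)^2 + \<epsilon>"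
proof -
  have pa': "\<omega> (A *v x) + Lk/2 * norm (x - yt)^2 + Lk/2 * norm (w - x)^2 \<le> \<omega> (A *v w) + Lk/2 * norm (w - yt)^2 + \<epsilon>"
    using pa L by (simp add: field_simps)
  have i: "Lk/2 * norm (w - yt)^2 - Lk/2 * norm (x - yt)^2 = Lk/2 * norm (w - y)^2 - Lk/2 * norm (x - y)^2 + inner (gf y) (w - x)"
    unfolding yt by (rule yt_id[OF L])
  have gi: "f y + inner (gf y) (w - y) \<le> f w" by (rule grad_ineq[OF conv der])
  have e: "inner (gf y) (w - x) = inner (gf y) (w - y) - inner (gf y) (x - y)" by (simp add: inner_diff_right)
  have e2: "Lk/2 * norm (x - y)^2 = B/2 * norm (x - y)^2 + \<rho>/2 * norm (x - y)^2" unfolding LB by (simp add: algebra_simps)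
  show ?thesis using pa' i gi e e2 Bc by linarith
qed

lemma outer_sub:
  fixes A :: "real^'n^'m" and \<omega> :: "real^'m \<Rightarrow> real"
  assumes L: "Lk > 0"
    and pa: "\<omega> (A *v x) + norm (x - yt)^2/(2*(1/Lk)) + norm (w - x)^2/(2*(1/Lk)) \<le> \<omega> (A *v w) + norm (w - yt)^2/(2*(1/Lk)) + \<epsilon>"
  shows "\<omega> (A *v x) + Lk * inner (yt - x) (w - x) - \<epsilon> \<le> \<omega> (A *v w)"
proof -
  have pa': "\<omega> (A *v x) + Lk/2 * norm (x - yt)^2 + Lk/2 * norm (w - x)^2 \<le> \<omega> (A *v w) + Lk/2 * norm (w - yt)^2 + \<epsilon>"
    using pa L by (simp add: field_simps)
  have s: "norm (w - yt)^2 = norm (w - x)^2 + 2 * inner (w - x) (x - yt) + norm (x - yt)^2" by (rule sq_id3)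
  have "Lk/2 * norm (w - yt)^2 = Lk/2 * norm (w - x)^2 + Lk * inner (w - x) (x - yt) + Lk/2 * norm (x - yt)^2"
    unfolding s by (simp add: algebra_simps)
  moreover have "Lk * inner (w - x) (x - yt) = - (Lk * inner (yt - x) (w - x))"
    by (simp add: inner_diff_left inner_diff_right inner_commute algebra_simps)
  ultimately show ?thesis using pa' by linarith
qed

lemma sigma_step:
  fixes a b l :: real
  assumes a: "a > 0" and b: "b > 0" and l: "l > 0" and ba: "b \<le> a" and h: "(a - b) * (a + b) * l = a^2 * b"
  shows "1/(2*l) \<le> 1/b - 1/a" and "1/b - 1/a \<le> 1/l"
proof -
  have ab: "a + b > 0" using a b by simp
  have u: "l * (a - b) * (a + b) \<le> (a * b) * (a + b)"
    using h a b by (simp add: power2_eq_square algebra_simps mult_right_mono)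
  then have u': "l * (a - b) \<le> a * b" using ab by (simp add: mult_le_cancel_right_pos)
  have lo: "(a * b) * (a + b) \<le> (2 * l * (a - b)) * (a + b)"
  proof -
    have "(a * b) * (a + b) \<le> (a*b) * (2*a)" using ba a b by (intro mult_left_mono) auto
    also have "\<dots> = 2 * (a^2 * b)" by (simp add: power2_eq_square algebra_simps)
    also have "\<dots> = (2 * l * (a - b)) * (a + b)" using h by (simp add: algebra_simps)
    finally show ?thesis .
  qed
  then have lo': "a * b \<le> 2 * l * (a - b)" using ab by (simp add: mult_le_cancel_right_pos)
  have eq: "1/b - 1/a = (a - b)/(a*b)" using a b by (simp add: field_simps)
  show "1/(2*l) \<le> 1/b - 1/a" unfolding eq using lo' a b l by (simp add: field_simps)
  show "1/b - 1/a \<le> 1/l" unfolding eq using u' a b l by (simp add: field_simps)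
qed

lemma alpha_analysis:
  fixes Lk \<alpha> :: "nat \<Rightarrow> real"
  assumes Lmin_pos: "0 < Lmin"
    and Lk_bnd: "\<forall>k. Lmin \<le> Lk k \<and> Lk k \<le> Lmax"
    and \<alpha>0: "\<alpha> 0 = 1"
    and \<alpha>_rng: "\<forall>k\<ge>1. 0 < \<alpha> k \<and> \<alpha> k \<le> 1"
    and \<alpha>_rec: "\<forall>k\<ge>1. 1 - \<alpha> k = \<alpha> k ^ 2 * Lk k / (\<alpha> (k - 1) ^ 2 * Lk (k - 1))"
  shows "\<forall>k. Lk k * \<alpha> k ^ 2 \<le> 4 * Lmax / (real k + 1)^2"
    and "\<forall>k. Lk k * \<alpha> k ^ 2 \<ge> Lmin / (real k + 1)^2"
    and "\<forall>k. \<alpha> k \<le> 2 * sqrt (Lmax / Lmin) / (real k + 1)"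
    and "\<forall>k\<ge>1. Lk k * \<alpha> k ^ 2 = Lk (k-1) * \<alpha> (k-1) ^ 2 * (1 - \<alpha> k)"
proof -
  have Lpos: "Lk k > 0" for k using Lk_bnd Lmin_pos by (meson less_le_trans)
  have apos: "\<alpha> k > 0" for k using \<alpha>0 \<alpha>_rng by (cases "k = 0") auto
  have ale1: "\<alpha> k \<le> 1" for k using \<alpha>0 \<alpha>_rng by (cases "k = 0") auto
  define \<sigma> where "\<sigma> k = \<alpha> k * sqrt (Lk k)" for k
  have spos: "\<sigma> k > 0" for k unfolding \<sigma>_def using apos Lpos by simp
  have sq: "\<sigma> k ^ 2 = Lk k * \<alpha> k ^ 2" for k unfolding \<sigma>_def using Lpos[of k]
    by (simp add: power_mult_distrib)
  have rec: "Lk (Suc k) * \<alpha> (Suc k) ^ 2 = Lk k * \<alpha> k ^ 2 * (1 - \<alpha> (Suc k))" for k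
  proof -
    have "1 - \<alpha> (Suc k) = \<alpha> (Suc k) ^ 2 * Lk (Suc k) / (\<alpha> k ^ 2 * Lk k)" using \<alpha>_rec[rule_format, of "Suc k"] by simp
    moreover have "\<alpha> k ^ 2 * Lk k > 0" using apos[of k] Lpos[of k] by simp
    ultimately have e: "(1 - \<alpha> (Suc k)) * (\<alpha> k ^ 2 * Lk k) = \<alpha> (Suc k) ^ 2 * Lk (Suc k)"
      using apos[of k] Lpos[of k] by (simp add: eq_divide_eq)
    then show ?thesis by (simp add: ac_simps)
  qed
  then show "\<forall>k\<ge>1. Lk k * \<alpha> k ^ 2 = Lk (k-1) * \<alpha> (k-1) ^ 2 * (1 - \<alpha> k)"
    by (metis Suc_diff_1 less_eq_Suc_le One_nat_def)
  have steps: "1/(2* sqrt Lmax) \<le> 1/\<sigma> (Suc k) - 1/\<sigma> k \<and> 1/\<sigma> (Suc k) - 1/\<sigma> k \<le> 1/sqrt Lmin" for k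
  proof -
    let ?a = "\<sigma> k" and ?b = "\<sigma> (Suc k)" and ?l = "sqrt (Lk (Suc k))"
    have l: "?l > 0" using Lpos by simp
    have al: "\<alpha> (Suc k) = ?b / ?l" unfolding \<sigma>_def using l by simp
    have b2: "?b^2 = ?a^2 * (1 - \<alpha> (Suc k))" unfolding sq using rec by simp
    have ba: "?b \<le> ?a"
    proof -
      have "?b^2 \<le> ?a^2" unfolding b2 using apos[of "Suc k"] spos[of k] by (simp add: mult_left_le)
      then show ?thesis using spos[of k] spos[of "Suc k"] by (simp add: power_mono_iff)
    qed
    have h: "(?a - ?b) * (?a + ?b) * ?l = ?a^2 * ?b"
    proof -
      have "(?a - ?b) * (?a + ?b) = ?a^2 - ?b^2" by (simp add: power2_eq_square algebra_simps)
      also have "\<dots> = ?a^2 * \<alpha> (Suc k)" unfolding b2 by (simp add: algebra_simps)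
      finally show ?thesis unfolding al using l by (simp add: field_simps)
    qed
    note st = sigma_step[OF spos[of k] spos[of "Suc k"] l ba h]
    have "1/(2* sqrt Lmax) \<le> 1/(2*?l)" using Lk_bnd Lpos l by (simp add: frac_le)
    moreover have "1/?l \<le> 1/sqrt Lmin" using Lk_bnd Lmin_pos by (simp add: frac_le)
    ultimately show ?thesis using st by linarith
  qed
  have s0: "1/\<sigma> 0 = 1/sqrt (Lk 0)" unfolding \<sigma>_def using \<alpha>0 by simp
  have Lmax_pos: "Lmax > 0" using Lk_bnd Lpos by (meson less_le_trans)
  have up: "1/\<sigma> k \<ge> (real k + 1) / (2 * sqrt Lmax)" for k
  proof (induction k)
    case 0
    have "1/sqrt Lmax \<le> 1/sqrt (Lk 0)" using Lk_bnd Lpos by (simp add: frac_le)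
    moreover have "1/(2* sqrt Lmax) \<le> 1/sqrt Lmax" using Lmax_pos by (simp add: frac_le)
    ultimately show ?case using s0 by simp
  next
    case (Suc k)
    then show ?case using steps[of k] by (simp add: add_divide_distrib)
  qed
  have lo: "1/\<sigma> k \<le> (real k + 1) / sqrt Lmin" for k
  proof (induction k)
    case 0
    have "1/sqrt (Lk 0) \<le> 1/sqrt Lmin" using Lk_bnd Lmin_pos by (simp add: frac_le)
    then show ?case using s0 by simp
  next
    case (Suc k)
    then show ?case using steps[of k] by (simp add: add_divide_distrib)
  qed
  have g_up: "Lk k * \<alpha> k ^ 2 \<le> 4 * Lmax / (real k + 1)^2" for k
  proof -
    have p: "0 < (real k + 1) / (2 * sqrt Lmax)" using Lmax_pos by simp
    have "\<sigma> k \<le> 2 * sqrt Lmax / (real k + 1)"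
      using up[of k] spos[of k] p Lmax_pos by (simp add: field_simps)
    then have "\<sigma> k ^ 2 \<le> (2 * sqrt Lmax / (real k + 1))^2" using spos[of k] by (simp add: power_mono)
    then show ?thesis unfolding sq using Lmax_pos by (simp add: power_divide power_mult_distrib)
  qed
  then show "\<forall>k. Lk k * \<alpha> k ^ 2 \<le> 4 * Lmax / (real k + 1)^2" by blast
  show "\<forall>k. Lk k * \<alpha> k ^ 2 \<ge> Lmin / (real k + 1)^2"
  proof
    fix k
    have "sqrt Lmin / (real k + 1) \<le> \<sigma> k"
      using lo[of k] spos[of k] Lmin_pos by (simp add: field_simps)
    then have "(sqrt Lmin / (real k + 1))^2 \<le> \<sigma> k ^ 2" using Lmin_pos by (intro power_mono) auto
    then show "Lk k * \<alpha> k ^ 2 \<ge> Lmin / (real k + 1)^2" unfolding sq using Lmin_pos by (simp add: power_divide)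
  qed
  show "\<forall>k. \<alpha> k \<le> 2 * sqrt (Lmax / Lmin) / (real k + 1)"
  proof
    fix k
    have p: "0 < (real k + 1) / (2 * sqrt Lmax)" using Lmax_pos by simp
    have s: "\<sigma> k \<le> 2 * sqrt Lmax / (real k + 1)"
      using up[of k] spos[of k] p Lmax_pos by (simp add: field_simps)
    have "\<alpha> k = \<sigma> k / sqrt (Lk k)" unfolding \<sigma>_def using Lpos[of k] by simp
    also have "\<dots> \<le> \<sigma> k / sqrt Lmin" using Lk_bnd Lmin_pos spos[of k] Lpos[of k] by (intro divide_left_mono) auto
    also have "\<dots> \<le> (2 * sqrt Lmax / (real k + 1)) / sqrt Lmin" using s Lmin_pos by (intro divide_right_mono) auto
    also have "\<dots> = 2 * sqrt (Lmax / Lmin) / (real k + 1)" by (simp add: real_sqrt_divide)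
    finally show "\<alpha> k \<le> 2 * sqrt (Lmax / Lmin) / (real k + 1)" .
  qed
qed

lemma geo_bound:
  fixes r D X :: real
  assumes r: "0 < r" "r < 1" and D: "D > 0" and X: "X > 0" and j: "ln (D / X) / ln (1/r) \<le> real j"
  shows "D * r^j \<le> X"
proof -
  have lr: "ln (1/r) > 0" using r by simp
  have "ln (D / X) \<le> real j * ln (1/r)" using j lr by (simp add: divide_le_eq)
  then have "ln D - ln X \<le> - (real j * ln r)" using D X r by (simp add: ln_div ln_inverse)
  then have "ln D + real j * ln r \<le> ln X" by simp
  moreover have "ln (D * r^j) = ln D + real j * ln r" using D r by (simp add: ln_mult ln_realpow)
  ultimately have "ln (D * r^j) \<le> ln X" by simp
  then show ?thesis using D r X by simp
qed

lemma final_count: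
  fixes \<epsilon> h c a b S :: real and n :: nat
  assumes e: "0 < \<epsilon>" "\<epsilon> \<le> exp (-1)" and h: "0 < h" "h \<le> 1" and c: "c \<ge> 1"
    and n: "real n \<le> c * \<epsilon> powr (-h)" "n \<ge> 1" and ab: "a \<ge> 0" "b \<ge> 0"
    and S: "S \<le> real n * (a + b * ln (real n))"
  shows "S \<le> c * (a + b * ln c + b) * \<epsilon> powr (-h) * ln (1/\<epsilon>)"
proof -
  have l1: "ln (1/\<epsilon>) \<ge> 1"
  proof -
    have "1/\<epsilon> \<ge> exp 1" using e by (simp add: field_simps exp_minus)
    then have "ln (1/\<epsilon>) \<ge> ln (exp 1)" using e by (subst ln_le_cancel_iff) auto
    then show ?thesis by simp
  qed
  have ep: "\<epsilon> powr (-h) > 0" using e by simp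
  have "ln (real n) \<le> ln (c * \<epsilon> powr (-h))" using n ep c by (subst ln_le_cancel_iff) auto
  also have "\<dots> = ln c + h * ln (1/\<epsilon>)" using c e by (simp add: ln_mult ln_powr ln_div)
  also have "\<dots> \<le> ln c + ln (1/\<epsilon>)" using h l1 by (simp add: mult_left_le_one_le)
  finally have ln_n: "ln (real n) \<le> ln c + ln (1/\<epsilon>)" .
  have lc: "ln c \<ge> 0" using c by simp
  have "a + b * ln (real n) \<le> a + b * ln c + b * ln (1/\<epsilon>)"
    using ln_n ab by (simp add: mult_left_mono distrib_left[symmetric] add.assoc)
  also have "\<dots> \<le> (a + b * ln c + b) * ln (1/\<epsilon>)"
  proof -
    have "a + b * ln c \<le> (a + b * ln c) * ln (1/\<epsilon>)" using l1 ab lc by (metis add_nonneg_nonneg mult_le_cancel_left1 mult_nonneg_nonneg not_less)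
    then show ?thesis by (simp add: algebra_simps)
  qed
  finally have q: "a + b * ln (real n) \<le> (a + b * ln c + b) * ln (1/\<epsilon>)" .
  have q0: "0 \<le> a + b * ln (real n)" using ab n by simp
  have "S \<le> real n * (a + b * ln (real n))" by (rule S)
  also have "\<dots> \<le> (c * \<epsilon> powr (-h)) * ((a + b * ln c + b) * ln (1/\<epsilon>))"
    using n(1) q q0 by (intro mult_mono) auto
  finally show ?thesis by (simp add: algebra_simps)
qed

theorem corollary5p4:
  fixes f :: "real^'n \<Rightarrow> real" and gf :: "real^'n \<Rightarrow> real^'n" and L :: real
    and A :: "real^'n^'m" and \<omega> :: "real^'m \<Rightarrow> real" and K\<^sub>\<omega> :: real
    and xbar :: "real^'n"
    and E0 p Lmin Lmax \<kappa>min \<tau>max :: real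
    and B \<rho> Lk \<alpha> \<beta> \<kappa> :: "nat \<Rightarrow> real"
    and xm1 xcm1 :: "real^'n"
    and x xc y yt :: "nat \<Rightarrow> real^'n"
    and v :: "nat \<Rightarrow> nat \<Rightarrow> real^'m" and z :: "nat \<Rightarrow> nat \<Rightarrow> real^'n"
    and \<tau> :: "nat \<Rightarrow> nat \<Rightarrow> real" and J :: "nat \<Rightarrow> nat"
    and F :: "real^'n \<Rightarrow> real" and lam :: "nat \<Rightarrow> real" and eps :: "nat \<Rightarrow> nat \<Rightarrow> real"
  assumes f_convex: "convex_on UNIV f"
    and f_grad: "\<forall>u. (f has_derivative (\<lambda>h. inner (gf u) h)) (at u)"
    and f_smooth: "\<forall>u w. f u - f w - inner (gf w) (u - w) \<le> L / 2 * norm (u - w)^2"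
    and \<omega>_convex: "convex_on UNIV \<omega>"
    and \<omega>_lip: "K\<^sub>\<omega>-lipschitz_on UNIV \<omega>"
    and F_def: "\<forall>u. F u = f u + \<omega> (A *v u)"
    and xbar_min: "\<forall>u. F xbar \<le> F u"
    and E0_pos: "E0 > 0" and p_gt: "p > 1"
    and B_pos: "\<forall>k. B k > 0" and \<rho>_nn: "\<forall>k. \<rho> k \<ge> 0"
    and Lk_def: "\<forall>k. Lk k = B k + \<rho> k"
    and Lmin_pos: "0 < Lmin" and Lmin_le: "Lmin \<le> Lmax"
    and Lk_bnd: "\<forall>k. Lmin \<le> Lk k \<and> Lk k \<le> Lmax"
    and \<alpha>0: "\<alpha> 0 = 1"
    and \<alpha>_rng: "\<forall>k\<ge>1. 0 < \<alpha> k \<and> \<alpha> k \<le> 1"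
    and \<alpha>_rec: "\<forall>k\<ge>1. 1 - \<alpha> k = \<alpha> k ^ 2 * Lk k / (\<alpha> (k - 1) ^ 2 * Lk (k - 1))"
    and \<beta>_def: "\<forall>k. \<beta> k = (\<Prod>i=1..k. max (1 - \<alpha> i) (\<alpha> i ^ 2 * Lk i / (\<alpha> (i - 1) ^ 2 * Lk (i - 1))))"
    and y0: "y 0 = \<alpha> 0 *\<^sub>R xcm1 + (1 - \<alpha> 0) *\<^sub>R xm1"
    and ySuc: "\<forall>k. y (Suc k) = \<alpha> (Suc k) *\<^sub>R xc k + (1 - \<alpha> (Suc k)) *\<^sub>R x k"
    and lam_def: "\<forall>k. lam k = 1 / Lk k"
    and yt_def: "\<forall>k. yt k = y k - (1 / Lk k) *\<^sub>R gf (y k)"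
    and v0_dom: "\<forall>k. v k 0 \<in> edom (fconj \<omega>)"
    and \<tau>_pos: "\<forall>k j. \<tau> k j > 0"
    and v_step: "\<forall>k j. v k (Suc j) \<in> prox_set (fconj \<omega>) (1 / \<tau> k j)
                   (v k j - (1 / \<tau> k j) *\<^sub>R (A *v (lam k *\<^sub>R (transpose A *v v k j) - yt k)))"
    and \<tau>_cond: "\<forall>k j. lam k / 2 * norm (transpose A *v (v k (Suc j) - v k j))^2
                    \<le> \<tau> k j / 2 * norm (v k (Suc j) - v k j)^2"
    and z_def: "\<forall>k j. z k j = yt k - lam k *\<^sub>R (transpose A *v v k j)"
    and eps_def: "\<forall>k j. eps k j = (if k = 0 then E0
                    else E0 * \<beta> k * real k powr (- p) + \<rho> k / 2 * norm (z k j - y k)^2)"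
    and J_stop: "\<forall>k. G_in A \<omega> (lam k) (yt k) (z k (J k)) (v k (J k)) \<le> ereal (eps k (J k))"
    and J_least: "\<forall>k. \<forall>j<J k. \<not> (G_in A \<omega> (lam k) (yt k) (z k j) (v k j) \<le> ereal (eps k j))"
    and x_def: "\<forall>k. x k = z k (J k)"
    and B_cond: "\<forall>k. f (x k) - f (y k) - inner (gf (y k)) (x k - y k) \<le> B k / 2 * norm (x k - y k)^2"
    and xc0: "xc 0 = xm1 + (1 / \<alpha> 0) *\<^sub>R (x 0 - xm1)"
    and xcSuc: "\<forall>k. xc (Suc k) = x k + (1 / \<alpha> (Suc k)) *\<^sub>R (x (Suc k) - x k)"
    and QG: "\<forall>k. quad_growth (Psi_in A \<omega> (lam k) (yt k)) (\<kappa> k)"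
    and \<kappa>min_pos: "\<kappa>min > 0"
    and \<kappa>_bdd: "bdd_below (range \<kappa>)"
    and \<kappa>_inf: "(INF k. \<kappa> k) > \<kappa>min"
    and \<tau>_bnd: "\<forall>k j. \<tau> k j \<le> \<tau>max"
  shows "\<exists>C>0. \<exists>\<epsilon>1>0. \<forall>\<epsilon>. 0 < \<epsilon> \<and> \<epsilon> \<le> \<epsilon>1 \<longrightarrow>
           (\<exists>k. F (x k) - F xbar \<le> \<epsilon> \<and>
                (\<Sum>l\<le>k. real (J l + 1)) \<le> C * \<epsilon> powr (- 1 / 2) * ln (1 / \<epsilon>)) \<and>
           (\<exists>k. infdist 0 (eps_subdiff F (eps k (J k)) (x k)) \<le> \<epsilon> \<and>
                (\<Sum>l\<le>k. real (J l + 1)) \<le> C * \<epsilon> powr (- 1) * ln (1 / \<epsilon>))"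
proof -
  have Lpos: "\<And>k. Lk k > 0" using Lk_bnd Lmin_pos by (meson less_le_trans)
  have Lmax_pos: "Lmax > 0" using Lmin_pos Lmin_le by linarith
  have lam_pos: "\<And>k. lam k > 0" using lam_def Lpos by simp
  have lam_le: "\<And>k. lam k \<le> 1/Lmin" using lam_def Lk_bnd Lmin_pos Lpos by (simp add: frac_le)
  have K0: "K\<^sub>\<omega> \<ge> 0" using \<omega>_lip by (simp add: lipschitz_on_def)
  obtain NA where NA: "NA > 0" "\<forall>x. norm (A *v x) \<le> NA * norm x"
    using bounded_linear.pos_bounded[OF matrix_vector_mul_bounded_linear[of A]] by (metis mult.commute)
  obtain NT where NT: "NT > 0" "\<forall>x. norm (transpose A *v x) \<le> NT * norm x"
    using bounded_linear.pos_bounded[OF matrix_vector_mul_bounded_linear[of "transpose A"]] by (metis mult.commute)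
  have T0: "\<tau>max > 0" using \<tau>_pos \<tau>_bnd by (meson less_le_trans)
  have \<kappa>ge: "\<And>k. \<kappa>min \<le> \<kappa> k"
  proof -
    fix k have "(INF k. \<kappa> k) \<le> \<kappa> k" by (rule cINF_lower[OF \<kappa>_bdd]) simp
    then show "\<kappa>min \<le> \<kappa> k" using \<kappa>_inf by linarith
  qed
  define r where "r = sqrt (\<tau>max/(\<tau>max+\<kappa>min))"
  define D0 where "D0 = 8*K\<^sub>\<omega>^2*(\<tau>max + (1/Lmin)*NA*NT)"
  define D where "D = D0 + 1"
  have r0: "r > 0" unfolding r_def using T0 \<kappa>min_pos by simp
  have r1: "r < 1" unfolding r_def using T0 \<kappa>min_pos by simp
  have D0: "D0 \<ge> 0" unfolding D0_def using T0 Lmin_pos NA NT by simp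
  have Dpos: "D > 0" unfolding D_def using D0 by simp
  have inner: "G_in A \<omega> (lam k) (yt k) (z k (Suc j)) (v k (Suc j)) \<le> ereal (D * r^j)" for k j
  proof -
    have "G_in A \<omega> (lam k) (yt k) (yt k - lam k *\<^sub>R (transpose A *v v k (Suc j))) (v k (Suc j))
           \<le> ereal (8*K\<^sub>\<omega>^2*(\<tau>max + (1/Lmin)*NA*NT) * sqrt (\<tau>max/(\<tau>max+\<kappa>min)) ^ j)"
      by (rule inner_loop[where v="v k" and \<tau>="\<tau> k", OF \<omega>_convex \<omega>_lip lam_pos[of k] lam_le[of k] QG[rule_format, of k] \<kappa>ge[of k] \<kappa>min_pos
            _ _ v0_dom[rule_format, of k] _ _ NA(2) NT(2)])
         (use \<tau>_pos \<tau>_bnd v_step \<tau>_cond NA NT in auto)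
    moreover have "D0 * r^j \<le> D * r^j" unfolding D_def using r0 by simp
    ultimately show ?thesis unfolding z_def[rule_format] D0_def r_def
      by (meson ereal_less_eq(3) order_trans)
  qed
  note AA = alpha_analysis[OF Lmin_pos Lk_bnd \<alpha>0 \<alpha>_rng \<alpha>_rec]
  define \<gamma> where "\<gamma> k = Lk k * \<alpha> k ^ 2" for k
  have apos: "\<alpha> k > 0" for k using \<alpha>0 \<alpha>_rng by (cases "k = 0") auto
  have ale1: "\<alpha> k \<le> 1" for k using \<alpha>0 \<alpha>_rng by (cases "k = 0") auto
  have \<gamma>pos: "\<gamma> k > 0" for k unfolding \<gamma>_def using Lpos[of k] apos[of k] by simp
  have \<gamma>up: "\<gamma> k \<le> 4 * Lmax / (real k + 1)^2" for k unfolding \<gamma>_def using AA(1) by blast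
  have \<gamma>lo: "\<gamma> k \<ge> Lmin / (real k + 1)^2" for k unfolding \<gamma>_def using AA(2) by blast
  have \<alpha>up: "\<alpha> k \<le> 2 * sqrt (Lmax / Lmin) / (real k + 1)" for k using AA(3) by blast
  have \<gamma>rec: "\<gamma> (Suc k) = \<gamma> k * (1 - \<alpha> (Suc k))" for k unfolding \<gamma>_def using AA(4)[rule_format, of "Suc k"] by simp
  have \<gamma>0: "\<gamma> 0 = Lk 0" unfolding \<gamma>_def using \<alpha>0 by simp
  have \<beta>eq: "\<beta> k = \<gamma> k / Lk 0" for k
  proof (induction k)
    case 0
    then show ?case using \<beta>_def \<gamma>0 Lpos[of 0] by simp
  next
    case (Suc k)
    have m: "max (1 - \<alpha> (Suc k)) (\<alpha> (Suc k) ^ 2 * Lk (Suc k) / (\<alpha> (Suc k - 1) ^ 2 * Lk (Suc k - 1))) = 1 - \<alpha> (Suc k)"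
      using \<alpha>_rec[rule_format, of "Suc k"] by simp
    have "\<beta> (Suc k) = (\<Prod>i=1..Suc k. max (1 - \<alpha> i) (\<alpha> i ^ 2 * Lk i / (\<alpha> (i - 1) ^ 2 * Lk (i - 1))))"
      using \<beta>_def by blast
    also have "\<dots> = max (1 - \<alpha> (Suc k)) (\<alpha> (Suc k) ^ 2 * Lk (Suc k) / (\<alpha> (Suc k - 1) ^ 2 * Lk (Suc k - 1)))
        * (\<Prod>i=1..k. max (1 - \<alpha> i) (\<alpha> i ^ 2 * Lk i / (\<alpha> (i - 1) ^ 2 * Lk (i - 1))))"
      by (rule prod.nat_ivl_Suc') simp
    also have "\<dots> = (1 - \<alpha> (Suc k)) * \<beta> k" unfolding m using \<beta>_def by simp
    also have "\<dots> = \<gamma> (Suc k) / Lk 0" unfolding Suc \<gamma>rec by simp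
    finally show ?case .
  qed
  define e where "e k = (if k = 0 then E0 else E0 * \<beta> k * real k powr (- p))" for k
  have eps_ge: "e k \<le> eps k j" for k j
  proof -
    have "0 \<le> \<rho> k / 2 * norm (z k j - y k)^2" using \<rho>_nn by simp
    then show ?thesis unfolding e_def using eps_def by simp
  qed
  define ce where "ce = E0 * Lmin / Lmax"
  have ce_pos: "ce > 0" unfolding ce_def using E0_pos Lmin_pos Lmax_pos by simp
  have e_lo: "ce * (real k + 1) powr (-(p+2)) \<le> e k" for k
  proof (cases "k = 0")
    case True
    have "ce \<le> E0" unfolding ce_def using E0_pos Lmin_pos Lmin_le Lmax_pos by (simp add: field_simps)
    then show ?thesis using True unfolding e_def by simp
  next
    case False
    have k1: "real k + 1 > 0" by simp
    have pw: "(real k + 1) powr (-(p+2)) = (real k + 1) powr (-p) / (real k + 1)^2"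
    proof -
      have h1: "(real k+1) powr (-p + -2) = (real k+1) powr (-p) * (real k+1) powr (-2)" by (rule powr_add)
      have h2: "(real k+1) powr (-2) = inverse ((real k+1) powr 2)" by (rule powr_minus)
      have h3: "(real k+1) powr 2 = (real k+1)^2" using k1 by (simp add: powr_numeral)
      have h4: "-(p+2) = -p + -2" by simp
      show ?thesis unfolding h4 h1 h2 h3 by (simp add: divide_inverse)
    qed
    have pk: "(real k + 1) powr (-p) \<le> real k powr (-p)" using False p_gt by (intro powr_mono2') auto
    have "ce * (real k + 1) powr (-(p+2)) = E0 * ((Lmin / (real k + 1)^2) / Lmax) * (real k + 1) powr (-p)"
      unfolding pw ce_def by (simp add: field_simps)
    also have "\<dots> \<le> E0 * (\<gamma> k / Lk 0) * real k powr (-p)"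
    proof -
      have "(Lmin / (real k + 1)^2) / Lmax \<le> \<gamma> k / Lk 0"
        using \<gamma>lo[of k] Lk_bnd Lpos[of 0] Lmin_pos \<gamma>pos[of k] by (intro frac_le) auto
      then show ?thesis using E0_pos pk Lmin_pos Lmax_pos
        by (intro mult_mono) (auto intro!: mult_nonneg_nonneg divide_nonneg_nonneg less_imp_le[OF \<gamma>pos] less_imp_le[OF Lpos])
    qed
    also have "\<dots> = e k" unfolding e_def \<beta>eq using False by simp
    finally show ?thesis .
  qed
  define lr where "lr = ln (1/r)"
  have lr: "lr > 0" unfolding lr_def using r0 r1 by simp
  define aJ where "aJ = 3 + \<bar>ln D - ln ce\<bar> / lr"
  define bJ where "bJ = (p + 2) / lr"
  have aJ: "aJ \<ge> 0" unfolding aJ_def using lr by simp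
  have bJ: "bJ \<ge> 0" unfolding bJ_def using lr p_gt by simp
  have J_bd: "real (J k) + 1 \<le> aJ + bJ * ln (real k + 1)" for k
  proof -
    define Y where "Y = ce * (real k + 1) powr (-(p+2))"
    have Y: "Y > 0" unfolding Y_def using ce_pos by simp
    define j where "j = nat \<lceil>ln (D / Y) / lr\<rceil>"
    have jj: "ln (D / Y) / ln (1/r) \<le> real j" unfolding j_def lr_def by linarith
    have "D * r^j \<le> Y" by (rule geo_bound[OF r0 r1 Dpos Y jj])
    also have "\<dots> \<le> eps k (Suc j)" unfolding Y_def using e_lo[of k] eps_ge[of k "Suc j"] by linarith
    finally have "G_in A \<omega> (lam k) (yt k) (z k (Suc j)) (v k (Suc j)) \<le> ereal (eps k (Suc j))"
      using inner[of k j] by (meson ereal_less_eq(3) order_trans)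
    then have Jle: "J k \<le> Suc j" using J_least[rule_format, of "Suc j" k] by (meson not_le)
    have lnDY: "ln (D / Y) = ln D - ln ce + (p + 2) * ln (real k + 1)"
      unfolding Y_def using Dpos ce_pos by (simp add: ln_div ln_mult ln_powr algebra_simps)
    have lk: "ln (real k + 1) \<ge> 0" by simp
    have "real j \<le> max 0 (ln (D / Y) / lr) + 1" unfolding j_def by linarith
    also have "max 0 (ln (D / Y) / lr) \<le> (\<bar>ln D - ln ce\<bar> + (p + 2) * ln (real k + 1)) / lr"
      unfolding lnDY using lr lk p_gt by (auto simp: divide_right_mono intro!: divide_nonneg_pos)
    finally have "real j \<le> (\<bar>ln D - ln ce\<bar> + (p + 2) * ln (real k + 1)) / lr + 1" by simp
    then have "real (J k) + 1 \<le> (\<bar>ln D - ln ce\<bar> + (p + 2) * ln (real k + 1)) / lr + 3" using Jle by linarith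
    moreover have "(\<bar>ln D - ln ce\<bar> + (p + 2) * ln (real k + 1)) / lr = \<bar>ln D - ln ce\<bar> / lr + bJ * ln (real k + 1)"
      unfolding bJ_def using lr by (simp add: field_simps)
    ultimately show ?thesis unfolding aJ_def by linarith
  qed
  have sum_bd: "(\<Sum>l\<le>k. real (J l + 1)) \<le> real (k+1) * (aJ + bJ * ln (real (k+1)))" for k
  proof -
    have "(\<Sum>l\<le>k. real (J l + 1)) \<le> (\<Sum>l\<le>k. aJ + bJ * ln (real (k+1)))"
    proof (rule sum_mono)
      fix l assume "l \<in> {..k}"
      then have "ln (real l + 1) \<le> ln (real (k+1))" by simp
      then have "bJ * ln (real l + 1) \<le> bJ * ln (real (k+1))" using bJ by (simp add: mult_left_mono)
      then show "real (J l + 1) \<le> aJ + bJ * ln (real (k+1))" using J_bd[of l] by simp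
    qed
    then show ?thesis by simp
  qed
  have yt_eq: "yt k = y k - (1 / Lk k) *\<^sub>R gf (y k)" for k using yt_def by blast
  have xz: "x k = yt k - lam k *\<^sub>R (transpose A *v v k (J k))" for k
    using x_def z_def by simp
  have pa: "\<omega> (A *v x k) + norm (x k - yt k)^2/(2*(1/Lk k)) + norm (w - x k)^2/(2*(1/Lk k))
      \<le> \<omega> (A *v w) + norm (w - yt k)^2/(2*(1/Lk k)) + eps k (J k)" for k w
  proof -
    have G: "G_in A \<omega> (lam k) (yt k) (x k) (v k (J k)) \<le> ereal (eps k (J k))"
      using J_stop x_def by simp
    show ?thesis using prox_approx[OF lam_pos[of k] xz[of k] G, of w] lam_def by simp
  qed
  have key: "F (x k) \<le> F w + Lk k/2 * norm (w - y k)^2 - Lk k/2 * norm (w - x k)^2 + e k" for k w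
  proof -
    have ok: "f (x k) + \<omega> (A *v x k) \<le> f w + \<omega> (A *v w) + Lk k/2 * norm (w - y k)^2 - Lk k/2 * norm (w - x k)^2
        - \<rho> k/2 * norm (x k - y k)^2 + eps k (J k)"
      by (rule outer_key[OF f_convex f_grad Lpos[of k] yt_eq[of k] pa[of k w] B_cond[rule_format, of k] Lk_def[rule_format, of k]])
    have "- \<rho> k/2 * norm (x k - y k)^2 + eps k (J k) \<le> e k"
    proof (cases "k = 0")
      case True
      have "0 \<le> \<rho> k/2 * norm (x k - y k)^2" using \<rho>_nn by simp
      then show ?thesis using True eps_def unfolding e_def by simp
    next
      case False
      then show ?thesis using eps_def x_def unfolding e_def by simp
    qed
    then show ?thesis using ok F_def by simp
  qed
  have F_conv: "F (a *\<^sub>R u + (1 - a) *\<^sub>R w) \<le> a * F u + (1 - a) * F w" if a: "0 \<le> a" "a \<le> 1" for a u w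
  proof -
    have "f ((1 - a) *\<^sub>R w + a *\<^sub>R u) \<le> (1 - a) * f w + a * f u"
      using convex_onD[OF f_convex] a by simp
    moreover have "\<omega> ((1 - a) *\<^sub>R (A *v w) + a *\<^sub>R (A *v u)) \<le> (1 - a) * \<omega> (A *v w) + a * \<omega> (A *v u)"
      using convex_onD[OF \<omega>_convex] a by simp
    moreover have "A *v (a *\<^sub>R u + (1 - a) *\<^sub>R w) = (1 - a) *\<^sub>R (A *v w) + a *\<^sub>R (A *v u)"
      by (simp add: matrix_vector_right_distrib matrix_vector_mult_scaleR)
    ultimately show ?thesis using F_def by (simp add: algebra_simps)
  qed
  define Xp where "Xp k = (if k = 0 then xcm1 else xc (k - 1))" for k
  define Wp where "Wp k = (if k = 0 then xm1 else x (k - 1))" for k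
  have y_eq: "y k = \<alpha> k *\<^sub>R Xp k + (1 - \<alpha> k) *\<^sub>R Wp k" for k
    using y0 ySuc unfolding Xp_def Wp_def by (cases k) auto
  have x_eq: "x k = \<alpha> k *\<^sub>R xc k + (1 - \<alpha> k) *\<^sub>R Wp k" for k
  proof (cases k)
    case 0
    then show ?thesis using xc0 \<alpha>0 unfolding Wp_def by simp
  next
    case (Suc m)
    have e: "xc k = x m + (1 / \<alpha> k) *\<^sub>R (x k - x m)" using xcSuc Suc by simp
    have "\<alpha> k *\<^sub>R xc k = \<alpha> k *\<^sub>R x m + (\<alpha> k * (1 / \<alpha> k)) *\<^sub>R (x k - x m)"
      unfolding e by (simp only: scaleR_add_right scaleR_scaleR)
    then have "\<alpha> k *\<^sub>R xc k = \<alpha> k *\<^sub>R x m + (x k - x m)" using apos[of k] by simp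
    then show ?thesis unfolding Wp_def using Suc by (simp add: algebra_simps)
  qed
  define R where "R u = norm (xbar - u)^2 / 2" for u
  define \<Delta> where "\<Delta> u = F u - F xbar" for u
  have \<Delta>0: "\<Delta> u \<ge> 0" for u unfolding \<Delta>_def using xbar_min by simp
  have R0: "R u \<ge> 0" for u unfolding R_def by simp
  have step: "\<Delta> (x k) \<le> (1 - \<alpha> k) * \<Delta> (Wp k) + \<gamma> k * (R (Xp k) - R (xc k)) + e k" for k
  proof -
    define w where "w = \<alpha> k *\<^sub>R xbar + (1 - \<alpha> k) *\<^sub>R Wp k"
    have w1: "w - y k = \<alpha> k *\<^sub>R (xbar - Xp k)" unfolding w_def y_eq by (simp add: algebra_simps)
    have w2: "w - x k = \<alpha> k *\<^sub>R (xbar - xc k)" unfolding w_def x_eq by (simp add: algebra_simps)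
    have n1: "Lk k/2 * norm (w - y k)^2 = \<gamma> k * R (Xp k)"
      unfolding w1 R_def \<gamma>_def using apos[of k] by (simp add: power_mult_distrib)
    have n2: "Lk k/2 * norm (w - x k)^2 = \<gamma> k * R (xc k)"
      unfolding w2 R_def \<gamma>_def using apos[of k] by (simp add: power_mult_distrib)
    have "F w \<le> \<alpha> k * F xbar + (1 - \<alpha> k) * F (Wp k)" unfolding w_def
      using F_conv apos[of k] ale1[of k] by (simp add: less_imp_le)
    then show ?thesis using key[of k w] n1 n2 unfolding \<Delta>_def by (simp add: algebra_simps)
  qed
  define Zs where "Zs = suminf (\<lambda>n. real n powr (-p))"
  have summ: "summable (\<lambda>n. real n powr (-p))" using summable_real_powr_iff[of "-p"] p_gt by simp
  have psum: "(\<Sum>i=1..k. real i powr (-p)) \<le> Zs" for k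
    unfolding Zs_def by (rule sum_le_suminf[OF summ]) auto
  have Zs0: "Zs \<ge> 0" using psum[of 0] by simp
  have L0: "Lk 0 > 0" by (rule Lpos)
  have \<Phi>: "\<Delta> (x k) / \<gamma> k + R (xc k) \<le> R xcm1 + E0 / Lk 0 * (1 + (\<Sum>i=1..k. real i powr (-p)))" for k
  proof (induction k)
    case 0
    have "\<Delta> (x 0) \<le> Lk 0 * (R xcm1 - R (xc 0)) + E0"
      using step[of 0] \<alpha>0 \<gamma>0 unfolding Xp_def e_def by simp
    then have "\<Delta> (x 0) \<le> Lk 0 * (R xcm1 - R (xc 0) + E0 / Lk 0)"
      using L0 by (simp add: distrib_left right_diff_distrib)
    then have "\<Delta> (x 0) / Lk 0 \<le> R xcm1 - R (xc 0) + E0 / Lk 0"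
      using L0 by (simp add: pos_divide_le_eq mult.commute)
    then show ?case using \<gamma>0 by simp
  next
    case (Suc k)
    let ?s = "real (Suc k) powr (-p)"
    have g': "\<gamma> (Suc k) > 0" by (rule \<gamma>pos)
    have a1: "1 - \<alpha> (Suc k) = \<gamma> (Suc k) / \<gamma> k" using \<gamma>rec[of k] \<gamma>pos[of k] by (simp add: field_simps)
    have e1: "e (Suc k) = \<gamma> (Suc k) * (E0 / Lk 0 * ?s)" unfolding e_def \<beta>eq by simp
    have "\<Delta> (x (Suc k)) \<le> \<gamma> (Suc k) / \<gamma> k * \<Delta> (x k) + \<gamma> (Suc k) * (R (xc k) - R (xc (Suc k))) + \<gamma> (Suc k) * (E0 / Lk 0 * ?s)"
      using step[of "Suc k"] unfolding Wp_def Xp_def a1 e1 by simp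
    also have "\<dots> = \<gamma> (Suc k) * (\<Delta> (x k) / \<gamma> k + R (xc k) - R (xc (Suc k)) + E0 / Lk 0 * ?s)"
      by (simp add: algebra_simps)
    finally have "\<Delta> (x (Suc k)) / \<gamma> (Suc k) \<le> \<Delta> (x k) / \<gamma> k + R (xc k) - R (xc (Suc k)) + E0 / Lk 0 * ?s"
      using g' by (simp add: divide_le_eq mult.commute)
    moreover have "(\<Sum>i=1..Suc k. real i powr (-p)) = ?s + (\<Sum>i=1..k. real i powr (-p))"
      by (rule sum.nat_ivl_Suc') simp
    ultimately show ?case using Suc by (simp add: algebra_simps)
  qed
  define M0 where "M0 = R xcm1 + E0 / Lk 0 * (1 + Zs)"
  have M0pos: "M0 > 0" unfolding M0_def using R0[of xcm1] E0_pos L0 Zs0 by (simp add: add_nonneg_pos)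
  have \<Phi>M: "\<Delta> (x k) / \<gamma> k + R (xc k) \<le> M0" for k
  proof -
    have "E0 / Lk 0 * (1 + (\<Sum>i=1..k. real i powr (-p))) \<le> E0 / Lk 0 * (1 + Zs)"
      using psum[of k] E0_pos L0 by (intro mult_left_mono) auto
    then show ?thesis using \<Phi>[of k] unfolding M0_def by linarith
  qed
  have \<Delta>bd: "\<Delta> (x k) \<le> 4 * Lmax * M0 / (real k + 1)^2" for k
  proof -
    have "\<Delta> (x k) / \<gamma> k \<le> M0" using \<Phi>M[of k] R0[of "xc k"] by linarith
    then have "\<Delta> (x k) \<le> \<gamma> k * M0" using \<gamma>pos[of k] by (simp add: divide_le_eq mult.commute)
    also have "\<dots> \<le> 4 * Lmax / (real k + 1)^2 * M0" using \<gamma>up[of k] M0pos by (intro mult_right_mono) auto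
    also have "\<dots> = 4 * Lmax * M0 / (real k + 1)^2" by simp
    finally show ?thesis .
  qed
  have Rxc: "R (xc k) \<le> M0" for k
  proof -
    have "\<Delta> (x k) / \<gamma> k \<ge> 0" using \<Delta>0 \<gamma>pos[of k] by simp
    then show ?thesis using \<Phi>M[of k] by linarith
  qed
  have RXp: "R (Xp k) \<le> M0" for k
  proof (cases k)
    case 0
    then show ?thesis unfolding Xp_def M0_def using E0_pos L0 Zs0 by simp
  next
    case (Suc m) then show ?thesis unfolding Xp_def using Rxc[of m] by simp
  qed
  have nR: "norm (xbar - u) \<le> sqrt (2 * M0)" if "R u \<le> M0" for u
    using that unfolding R_def by (intro real_le_rsqrt) simp
  have xy: "norm (x k - y k) \<le> \<alpha> k * (2 * sqrt (2 * M0))" for k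
  proof -
    have "x k - y k = \<alpha> k *\<^sub>R (xc k - Xp k)" unfolding x_eq y_eq by (simp add: algebra_simps)
    then have "norm (x k - y k) = \<alpha> k * norm (xc k - Xp k)" using apos[of k] by simp
    moreover have "norm (xc k - Xp k) \<le> norm (xbar - xc k) + norm (xbar - Xp k)"
      using norm_triangle_ineq4[of "xbar - Xp k" "xbar - xc k"] by (simp add: norm_minus_commute)
    moreover have "norm (xbar - xc k) + norm (xbar - Xp k) \<le> 2 * sqrt (2 * M0)"
      using nR[OF Rxc[of k]] nR[OF RXp[of k]] by simp
    ultimately show ?thesis using apos[of k] by (simp add: mult_left_mono)
  qed
  define L1 where "L1 = max L 1"
  have L1: "L1 > 0" unfolding L1_def by simp
  have sub: "gf (x k) + Lk k *\<^sub>R (yt k - x k) \<in> eps_subdiff F (eps k (J k)) (x k)" for k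
    unfolding eps_subdiff_def
  proof (intro CollectI allI)
    fix u
    have o1: "\<omega> (A *v x k) + Lk k * inner (yt k - x k) (u - x k) - eps k (J k) \<le> \<omega> (A *v u)"
      by (rule outer_sub[OF Lpos[of k] pa[of k u]])
    have o2: "f (x k) + inner (gf (x k)) (u - x k) \<le> f u" by (rule grad_ineq[OF f_convex f_grad])
    have "inner (gf (x k) + Lk k *\<^sub>R (yt k - x k)) (u - x k) = inner (gf (x k)) (u - x k) + Lk k * inner (yt k - x k) (u - x k)"
      by (simp add: inner_add_left)
    then show "inner (gf (x k) + Lk k *\<^sub>R (yt k - x k)) (u - x k) \<le> F u - F (x k) + eps k (J k)"
      using o1 o2 F_def by simp
  qed
  have gnorm: "norm (gf (x k) + Lk k *\<^sub>R (yt k - x k)) \<le> (L1 + Lmax) * norm (x k - y k)" for k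
  proof -
    have "Lk k *\<^sub>R (yt k - x k) = Lk k *\<^sub>R (y k - x k) - gf (y k)"
      unfolding yt_eq using Lpos[of k] by (simp add: algebra_simps)
    then have eq: "gf (x k) + Lk k *\<^sub>R (yt k - x k) = (gf (x k) - gf (y k)) + Lk k *\<^sub>R (y k - x k)"
      by simp
    have "norm (gf (x k) - gf (y k)) \<le> L1 * norm (x k - y k)"
      unfolding L1_def by (rule grad_lip[OF f_convex f_grad f_smooth])
    moreover have "norm (Lk k *\<^sub>R (y k - x k)) \<le> Lmax * norm (x k - y k)"
      using Lpos[of k] Lk_bnd by (simp add: norm_minus_commute mult_right_mono)
    ultimately show ?thesis unfolding eq using norm_triangle_ineq[of "gf (x k) - gf (y k)" "Lk k *\<^sub>R (y k - x k)"]
      by (simp add: algebra_simps)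
  qed
  define Q2 where "Q2 = (L1 + Lmax) * (2 * sqrt (2 * M0)) * (2 * sqrt (Lmax / Lmin))"
  have Q2: "Q2 \<ge> 0" unfolding Q2_def using L1 Lmax_pos M0pos Lmin_pos by simp
  have dist_bd: "infdist 0 (eps_subdiff F (eps k (J k)) (x k)) \<le> Q2 / (real k + 1)" for k
  proof -
    have "infdist 0 (eps_subdiff F (eps k (J k)) (x k)) \<le> dist 0 (gf (x k) + Lk k *\<^sub>R (yt k - x k))"
      by (rule infdist_le[OF sub])
    also have "\<dots> \<le> (L1 + Lmax) * norm (x k - y k)" using gnorm[of k] by simp
    also have "\<dots> \<le> (L1 + Lmax) * (\<alpha> k * (2 * sqrt (2 * M0)))"
      using xy[of k] L1 Lmax_pos by (intro mult_left_mono) auto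
    also have "\<dots> \<le> (L1 + Lmax) * ((2 * sqrt (Lmax / Lmin) / (real k + 1)) * (2 * sqrt (2 * M0)))"
      using \<alpha>up[of k] L1 Lmax_pos M0pos by (intro mult_left_mono mult_right_mono) auto
    also have "\<dots> = Q2 / (real k + 1)" unfolding Q2_def by (simp add: field_simps)
    finally show ?thesis .
  qed
  define Q1 where "Q1 = 4 * Lmax * M0"
  have Q1: "Q1 > 0" unfolding Q1_def using Lmax_pos M0pos by simp
  define c1 where "c1 = sqrt Q1 + 2"
  define c2 where "c2 = Q2 + 3"
  define C1 where "C1 = c1 * (aJ + bJ * ln c1 + bJ)"
  define C2 where "C2 = c2 * (aJ + bJ * ln c2 + bJ)"
  have c1: "c1 \<ge> 1" unfolding c1_def using Q1 by simp
  have c2: "c2 \<ge> 1" unfolding c2_def using Q2 by simp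
  have aJ3: "aJ \<ge> 3" unfolding aJ_def using lr by simp
  have C1pos: "C1 > 0" unfolding C1_def using c1 aJ3 bJ by (simp add: add_pos_nonneg)
  have C2pos: "C2 > 0" unfolding C2_def using c2 aJ3 bJ by (simp add: add_pos_nonneg)
  show ?thesis
  proof (rule exI[of _ "max C1 C2"], rule conjI[OF _ exI[of _ "exp (-1)"]], goal_cases)
    case 1 show ?case using C1pos by simp
  next
    case 2
    show ?case
    proof (intro conjI allI impI)
    show "exp (-1) > (0::real)" by simp
    fix \<epsilon> :: real assume e: "0 < \<epsilon> \<and> \<epsilon> \<le> exp (-1)"
    have e0: "\<epsilon> > 0" and e1: "\<epsilon> \<le> exp (-1)" using e by auto
    have ele1: "\<epsilon> \<le> 1" using e1 by (smt (verit) exp_le_one_iff)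
    have l1: "ln (1/\<epsilon>) \<ge> 0" using e0 ele1 by simp
    show "\<exists>k. F (x k) - F xbar \<le> \<epsilon> \<and> (\<Sum>l\<le>k. real (J l + 1)) \<le> max C1 C2 * \<epsilon> powr (- 1 / 2) * ln (1 / \<epsilon>)"
    proof -
      define k1 where "k1 = nat \<lceil>sqrt (Q1 / \<epsilon>)\<rceil>"
      have k1a: "sqrt (Q1 / \<epsilon>) \<le> real k1" unfolding k1_def by linarith
      have sq0: "sqrt (Q1 / \<epsilon>) \<ge> 0" using Q1 e0 by simp
      have k1b: "real k1 \<le> sqrt (Q1 / \<epsilon>) + 1" unfolding k1_def using sq0 of_int_ceiling_le_add_one[of "sqrt (Q1 / \<epsilon>)"] by simp
      have "Q1 / \<epsilon> \<le> (real k1 + 1)^2"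
      proof -
        have "sqrt (Q1 / \<epsilon>) \<le> real k1 + 1" using k1a by simp
        then have "(sqrt (Q1 / \<epsilon>))^2 \<le> (real k1 + 1)^2" using sq0 by (intro power_mono) auto
        then show ?thesis using Q1 e0 by simp
      qed
      then have "Q1 / (real k1 + 1)^2 \<le> \<epsilon>" using e0 by (simp add: field_simps)
      then have A1: "F (x k1) - F xbar \<le> \<epsilon>" using \<Delta>bd[of k1] unfolding \<Delta>_def Q1_def by simp
      have ep0: "\<epsilon> powr (-(1/2)) = inverse (sqrt \<epsilon>)"
        by (simp only: powr_minus powr_half_sqrt[OF less_imp_le[OF e0]])
      have ep: "\<epsilon> powr (-(1/2)) = 1 / sqrt \<epsilon>" unfolding ep0 by (rule inverse_eq_divide)
      have ep1: "\<epsilon> powr (-(1/2)) \<ge> 1" unfolding ep using e0 ele1 by (simp add: real_sqrt_le_1_iff)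
      have "real (k1 + 1) \<le> sqrt Q1 * \<epsilon> powr (-(1/2)) + 2" using k1b e0 Q1 unfolding ep
        by (simp add: real_sqrt_divide)
      also have "\<dots> \<le> c1 * \<epsilon> powr (-(1/2))" unfolding c1_def using ep1 by (simp add: algebra_simps)
      finally have n1: "real (k1 + 1) \<le> c1 * \<epsilon> powr (-(1/2))" .
      have "(\<Sum>l\<le>k1. real (J l + 1)) \<le> C1 * \<epsilon> powr (-(1/2)) * ln (1/\<epsilon>)"
        unfolding C1_def by (rule final_count[OF e0 e1 _ _ c1 n1 _ aJ bJ sum_bd]) auto
      also have "\<dots> \<le> max C1 C2 * \<epsilon> powr (-(1/2)) * ln (1/\<epsilon>)"
        using l1 by (intro mult_right_mono) auto
      finally have A2: "(\<Sum>l\<le>k1. real (J l + 1)) \<le> max C1 C2 * \<epsilon> powr (- 1 / 2) * ln (1 / \<epsilon>)" by simp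
      show ?thesis using A1 A2 by blast
    qed
    show "\<exists>k. infdist 0 (eps_subdiff F (eps k (J k)) (x k)) \<le> \<epsilon> \<and> (\<Sum>l\<le>k. real (J l + 1)) \<le> max C1 C2 * \<epsilon> powr (- 1) * ln (1 / \<epsilon>)"
    proof -
      define k2 where "k2 = nat \<lceil>(Q2 + 1) / \<epsilon>\<rceil>"
      have k2a: "(Q2 + 1) / \<epsilon> \<le> real k2" unfolding k2_def by linarith
      have q20: "(Q2 + 1) / \<epsilon> \<ge> 0" using Q2 e0 by simp
      have k2b: "real k2 \<le> (Q2 + 1) / \<epsilon> + 1" unfolding k2_def using q20 of_int_ceiling_le_add_one[of "(Q2 + 1) / \<epsilon>"] by simp
      have "Q2 / (real k2 + 1) \<le> (Q2 + 1) / (real k2 + 1)" by (simp add: divide_right_mono)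
      also have "\<dots> \<le> \<epsilon>" using k2a e0 by (simp add: field_simps)
      finally have B1: "infdist 0 (eps_subdiff F (eps k2 (J k2)) (x k2)) \<le> \<epsilon>" using dist_bd[of k2] by simp
      have ep0: "\<epsilon> powr (-1) = inverse (\<epsilon> powr 1)" by (rule powr_minus)
      have ep: "\<epsilon> powr (-1) = 1 / \<epsilon>" unfolding ep0 using e0 by (simp add: inverse_eq_divide)
      have "real (k2 + 1) \<le> (Q2 + 1) / \<epsilon> + 2" using k2b by simp
      also have "\<dots> \<le> c2 * \<epsilon> powr (-1)" unfolding c2_def ep using e0 ele1 by (simp add: field_simps)
      finally have n2: "real (k2 + 1) \<le> c2 * \<epsilon> powr (-1)" .
      have "(\<Sum>l\<le>k2. real (J l + 1)) \<le> C2 * \<epsilon> powr (-1) * ln (1/\<epsilon>)"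
        unfolding C2_def by (rule final_count[OF e0 e1 _ _ c2 n2 _ aJ bJ sum_bd]) auto
      also have "\<dots> \<le> max C1 C2 * \<epsilon> powr (-1) * ln (1/\<epsilon>)"
        using l1 by (intro mult_right_mono) auto
      finally show ?thesis using B1 by blast
    qed
    qed
  qed
qed

end
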